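(* Let $f:\mathbb{R}^d\to\mathbb{R}$ be $\beta$-smooth with minimum value $f^\star$, and run AdaSGD (as defined in the context) for $T$ steps with parameters $\eta,\gamma>0$ using a stochastic gradient oracle with bounded affine noise with parameters $\sigma_0,\sigma_1\ge0$. Then for any $\delta\in(0,1)$, with probability at least $1-\delta$, $\bar\Delta_{T+1}:=\max_{1\le t\le T+1}f(w_t)-f^\star\le F$, where $\Delta_1=f(w_1)-f^\star$, $$F=2\Delta_1+\big(3\log\tfrac T\delta+4C_1\big)\eta\sigma_0+\big(9\log^2\tfrac T\delta+16C_1^2\big)\eta^2\beta\sigma_1^2+\eta^2\beta C_1,$$ $$C_1=\log\Big(1+\frac{2\sigma_0^2T+8(1+\sigma_1^2)(\eta^2\beta^2T^3+\beta\Delta_1T)}{\gamma^2}\Big).$$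
   Context: $\|\cdot\|$ is the Euclidean norm and $\log$ the base-2 logarithm. $\beta$-smooth: $\|\nabla f(x)-\nabla f(y)\|\le\beta\|x-y\|$. Oracle: queried at $w$, returns random $g(w)$ with $\mathbb{E}[g(w)\mid w]=\nabla f(w)$ and, with probability one, $\|g(w)-\nabla f(w)\|^2\le\sigma_0^2+\sigma_1^2\|\nabla f(w)\|^2$. AdaSGD: arbitrary $w_1$; for $t=1,\dots,T$, $g_t=g(w_t)$ a fresh oracle answer ($\mathbb{E}[g_t\mid g_1,\dots,g_{t-1}]=\nabla f(w_t)$), $\eta_t=\eta/\sqrt{\gamma^2+\sum_{s=1}^t\|g_s\|^2}$, $w_{t+1}=w_t-\eta_tg_t$. *)

theory Defs
  imports "HOL-Analysis.Analysis" "HOL-Probability.Probability"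
begin

text \<open>AdaSGD iterates, indexed from 1 (index 0 is unused and set to w1).\<close>
fun adasgd_w :: "'d::real_normed_vector \<Rightarrow> real \<Rightarrow> real \<Rightarrow> (nat \<Rightarrow> 'd) \<Rightarrow> nat \<Rightarrow> 'd" where
  "adasgd_w w1 \<eta> \<gamma> g 0 = w1"
| "adasgd_w w1 \<eta> \<gamma> g (Suc t) =
     (if t = 0 then w1
      else adasgd_w w1 \<eta> \<gamma> g t
           - (\<eta> / sqrt (\<gamma>\<^sup>2 + (\<Sum>s=1..t. (norm (g s))\<^sup>2))) *\<^sub>R g t)"

definition adasgd_filt :: "'m measure \<Rightarrow> (nat \<Rightarrow> 'm \<Rightarrow> 'd::euclidean_space) \<Rightarrow> nat \<Rightarrow> 'm measure" where
  "adasgd_filt M G t =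
     sigma (space M) (\<Union>s\<in>{1..<t}. {G s -` A \<inter> space M | A. A \<in> sets borel})"

end

theory Submission
  imports Defs
begin
lemma descent:
  fixes f :: "'d::euclidean_space \<Rightarrow> real" and df :: "'d \<Rightarrow> 'd"
  assumes grad: "\<And>x. GDERIV f x :> df x"
    and smooth: "\<And>x y. norm (df x - df y) \<le> \<beta> * norm (x - y)"
  shows "f y \<le> f x + df x \<bullet> (y - x) + \<beta> / 2 * (norm (y - x))\<^sup>2"
proof -
  define u where "u = y - x"
  define \<phi> where "\<phi> = (\<lambda>\<tau>::real. f (x + \<tau> *\<^sub>R u) - \<tau> * (df x \<bullet> u) - \<beta> / 2 * \<tau>\<^sup>2 * (norm u)\<^sup>2)"
  have der: "(\<phi> has_real_derivative (df (x + \<tau> *\<^sub>R u) \<bullet> u - df x \<bullet> u - \<beta> * \<tau> * (norm u)\<^sup>2)) (at \<tau>)" for \<tau>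
  proof -
    have h1: "((\<lambda>\<tau>. x + \<tau> *\<^sub>R u) has_derivative (\<lambda>h. h *\<^sub>R u)) (at \<tau>)"
      by (auto intro!: derivative_eq_intros)
    have h2: "(f has_derivative (\<lambda>h. h \<bullet> df (x + \<tau> *\<^sub>R u))) (at (x + \<tau> *\<^sub>R u))"
      using grad[of "x + \<tau> *\<^sub>R u"] unfolding gderiv_def by simp
    have "((\<lambda>\<tau>. f (x + \<tau> *\<^sub>R u)) has_derivative (\<lambda>h. (h *\<^sub>R u) \<bullet> df (x + \<tau> *\<^sub>R u))) (at \<tau>)"
      using has_derivative_compose[OF h1 h2] by (simp add: o_def)
    then have "((\<lambda>\<tau>. f (x + \<tau> *\<^sub>R u)) has_real_derivative (df (x + \<tau> *\<^sub>R u) \<bullet> u)) (at \<tau>)"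
      by (simp add: has_field_derivative_def inner_commute mult_commute_abs)
    then show ?thesis unfolding \<phi>_def
      by (auto intro!: derivative_eq_intros)
  qed
  have "\<phi> 1 \<le> \<phi> 0"
  proof (rule DERIV_nonpos_imp_nonincreasing[of 0 1])
    fix \<tau> :: real assume t: "0 \<le> \<tau>" "\<tau> \<le> 1"
    have "(df (x + \<tau> *\<^sub>R u) - df x) \<bullet> u \<le> norm (df (x + \<tau> *\<^sub>R u) - df x) * norm u"
      by (rule norm_cauchy_schwarz)
    also have "\<dots> \<le> \<beta> * norm (\<tau> *\<^sub>R u) * norm u"
      using smooth[of "x + \<tau> *\<^sub>R u" x] by (intro mult_right_mono) auto
    also have "\<dots> = \<beta> * \<tau> * (norm u)\<^sup>2" using t by (simp add: power2_eq_square)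
    finally show "\<exists>y. (\<phi> has_real_derivative y) (at \<tau>) \<and> y \<le> 0"
      using der[of \<tau>] by (intro exI[of _ "df (x + \<tau> *\<^sub>R u) \<bullet> u - df x \<bullet> u - \<beta> * \<tau> * (norm u)\<^sup>2"])
        (simp add: inner_diff_left)
  qed simp
  then show ?thesis unfolding \<phi>_def u_def by simp
qed

lemma beta_nonneg:
  fixes df :: "'d::euclidean_space \<Rightarrow> 'd"
  assumes smooth: "\<And>x y. norm (df x - df y) \<le> \<beta> * norm (x - y)"
  shows "\<beta> \<ge> 0"
proof -
  obtain b :: 'd where b: "b \<in> Basis" using nonempty_Basis by blast
  have "0 \<le> \<beta> * norm (b - 0)" using smooth[of b 0] norm_ge_zero[of "df b - df 0"] by linarith
  moreover have "norm (b - 0) > 0" using b by auto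
  ultimately show ?thesis by (simp add: zero_le_mult_iff)
qed

lemma grad_bound:
  fixes f :: "'d::euclidean_space \<Rightarrow> real" and df :: "'d \<Rightarrow> 'd"
  assumes grad: "\<And>x. GDERIV f x :> df x"
    and smooth: "\<And>x y. norm (df x - df y) \<le> \<beta> * norm (x - y)"
    and fmin: "\<And>x. fstar \<le> f x"
  shows "(norm (df x))\<^sup>2 \<le> 2 * \<beta> * (f x - fstar)"
proof -
  have b0: "\<beta> \<ge> 0" by (rule beta_nonneg[OF smooth])
  have key: "fstar \<le> f x - t * (norm (df x))\<^sup>2 + \<beta> / 2 * t\<^sup>2 * (norm (df x))\<^sup>2" for t
  proof -
    have "fstar \<le> f (x - t *\<^sub>R df x)" by (rule fmin)
    also have "\<dots> \<le> f x + df x \<bullet> ((x - t *\<^sub>R df x) - x) + \<beta> / 2 * (norm ((x - t *\<^sub>R df x) - x))\<^sup>2"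
      by (rule descent[OF grad smooth])
    also have "\<dots> = f x - t * (norm (df x))\<^sup>2 + \<beta> / 2 * t\<^sup>2 * (norm (df x))\<^sup>2"
      by (simp add: power2_norm_eq_inner power_mult_distrib)
    finally show ?thesis .
  qed
  show ?thesis
  proof (cases "\<beta> = 0")
    case True
    have "(norm (df x))\<^sup>2 = 0"
    proof (rule ccontr)
      assume ne: "(norm (df x))\<^sup>2 \<noteq> 0"
      then have p: "(norm (df x))\<^sup>2 > 0" by simp
      have "fstar \<le> f x - ((f x - fstar + 1) / (norm (df x))\<^sup>2) * (norm (df x))\<^sup>2"
        using key[of "(f x - fstar + 1) / (norm (df x))\<^sup>2"] True by simp
      then show False using ne by simp
    qed
    then show ?thesis using True by simp
  next
    case False
    then have bp: "\<beta> > 0" using b0 by simp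
    have "fstar \<le> f x - (1/\<beta>) * (norm (df x))\<^sup>2 + \<beta> / 2 * (1/\<beta>)\<^sup>2 * (norm (df x))\<^sup>2"
      by (rule key)
    also have "\<dots> = f x - (norm (df x))\<^sup>2 / (2 * \<beta>)"
      using bp by (simp add: field_simps power2_eq_square)
    finally have "(norm (df x))\<^sup>2 / (2 * \<beta>) \<le> f x - fstar" by simp
    then show ?thesis using bp by (simp add: field_simps)
  qed
qed

lemma ln2_le: "ln (2::real) \<le> 3/4"
proof -
  have "1 + 3/4 + (3/4::real)\<^sup>2 / 2 \<le> exp (3/4)" by (rule exp_lower_Taylor_quadratic) simp
  then have "2 \<le> exp (3/4::real)" by (simp add: power2_eq_square)
  then show ?thesis by (metis exp_gt_zero ln_exp ln_le_cancel_iff zero_less_numeral)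
qed

lemma diff_frac: "G > 0 \<Longrightarrow> H > (0::real) \<Longrightarrow> (\<eta> / H - \<eta> / G) * p = \<eta> * ((G\<^sup>2 - H\<^sup>2) * p) / (G * H * (G + H))"
proof -
  assume a: "G > 0" "H > 0"
  then have gh: "G + H > 0" by simp
  have n: "\<eta> * ((G - H) * p) * (G + H) = \<eta> * ((G\<^sup>2 - H\<^sup>2) * p)" by (simp add: power2_eq_square algebra_simps)
  have "(\<eta> / H - \<eta> / G) * p = \<eta> * ((G - H) * p) / (G * H)" using a by (simp add: field_simps)
  also have "\<dots> = \<eta> * ((G - H) * p) / (G * H) * ((G + H) / (G + H))" using gh by simp
  also have "\<dots> = \<eta> * ((G - H) * p) * (G + H) / (G * H * (G + H))" by (rule times_divide_times_eq)
  also have "\<dots> = \<eta> * ((G\<^sup>2 - H\<^sup>2) * p) / (G * H * (G + H))" by (simp only: n)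
  finally show ?thesis .
qed

lemma step_ineq:
  fixes D g :: "'d::euclidean_space"
  assumes a: "a > 0" and r: "norm (g - D) \<le> r" and R: "r \<le> R" and eta: "\<eta> > 0"
  defines "H \<equiv> sqrt (a + (norm D)\<^sup>2 + r\<^sup>2)" and "G \<equiv> sqrt (a + (norm g)\<^sup>2)"
  shows "(\<eta> / H - \<eta> / G) * (D \<bullet> g) \<le> \<eta> / H * (norm D)\<^sup>2 / 2 + 5 / 2 * \<eta> * R * ((norm g)\<^sup>2 / G\<^sup>2)"
proof -
  define n where "n = norm D"
  define m where "m = norm g"
  have r0: "r \<ge> 0" using r norm_ge_zero[of "g - D"] by linarith
  have n0: "n \<ge> 0" "m \<ge> 0" by (auto simp: n_def m_def)
  have sq0: "0 \<le> n\<^sup>2" "0 \<le> r\<^sup>2" "0 \<le> m\<^sup>2" by simp_all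
  have s1: "a + n\<^sup>2 + r\<^sup>2 > 0" "a + m\<^sup>2 > 0" using a sq0 by linarith+
  have H': "H = sqrt (a + n\<^sup>2 + r\<^sup>2)" unfolding H_def n_def ..
  have G': "G = sqrt (a + m\<^sup>2)" unfolding G_def m_def ..
  have H2: "H\<^sup>2 = a + n\<^sup>2 + r\<^sup>2" unfolding H' using s1 by simp
  have G2: "G\<^sup>2 = a + m\<^sup>2" unfolding G' using s1 by simp
  have Hp: "H > 0" unfolding H' using s1 by simp
  have Gp: "G > 0" unfolding G' using s1 by simp
  have "r\<^sup>2 \<le> H\<^sup>2" using H2 a sq0 by linarith
  then have rH: "r \<le> H" using Hp power2_le_imp_le[of r H] by simp
  have p: "\<bar>D \<bullet> g\<bar> \<le> n * m" unfolding n_def m_def by (rule Cauchy_Schwarz_ineq2)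
  have diffsq: "\<bar>G\<^sup>2 - H\<^sup>2\<bar> \<le> 2 * (n * r) + r\<^sup>2"
  proof -
    have e: "m\<^sup>2 - n\<^sup>2 = 2 * (D \<bullet> (g - D)) + (norm (g - D))\<^sup>2"
    proof -
      have "D \<bullet> (g - D) = ((norm (D + (g - D)))\<^sup>2 - (norm D)\<^sup>2 - (norm (g - D))\<^sup>2) / 2" by (rule dot_norm)
      then show ?thesis unfolding m_def n_def by simp
    qed
    have "\<bar>D \<bullet> (g - D)\<bar> \<le> n * r"
    proof -
      have "\<bar>D \<bullet> (g - D)\<bar> \<le> n * norm (g - D)" unfolding n_def by (rule Cauchy_Schwarz_ineq2)
      moreover have "n * norm (g - D) \<le> n * r" using r n0 by (intro mult_left_mono) auto
      ultimately show ?thesis by linarith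
    qed
    moreover have "(norm (g - D))\<^sup>2 \<le> r\<^sup>2" using r by (simp add: power_mono)
    moreover have "(norm (g - D))\<^sup>2 \<ge> 0" by simp
    ultimately show ?thesis unfolding abs_le_iff using G2 H2 e by linarith
  qed
  have "(\<eta> / H - \<eta> / G) * (D \<bullet> g) = \<eta> * ((G\<^sup>2 - H\<^sup>2) * (D \<bullet> g)) / (G * H * (G + H))"
    by (rule diff_frac[OF Gp Hp])
  also have "\<dots> \<le> \<eta> * ((2 * (n * r) + r\<^sup>2) * (n * m)) / (G * H * (G + H))"
  proof -
    have "(G\<^sup>2 - H\<^sup>2) * (D \<bullet> g) \<le> \<bar>G\<^sup>2 - H\<^sup>2\<bar> * \<bar>D \<bullet> g\<bar>" by (simp add: abs_mult[symmetric])
    also have "\<dots> \<le> (2 * (n * r) + r\<^sup>2) * (n * m)" using diffsq p by (intro mult_mono) auto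
    finally show ?thesis using eta Hp Gp by (intro divide_right_mono mult_left_mono) auto
  qed
  also have "\<dots> \<le> \<eta> * ((2 * (n * r) + r\<^sup>2) * (n * m)) / (G * H * H)"
    using Hp Gp eta n0 r0 by (intro divide_left_mono mult_nonneg_nonneg mult_left_mono mult_pos_pos) auto
  also have "\<dots> \<le> \<eta> / H * n\<^sup>2 / 2 + 5 / 2 * \<eta> * r * (m\<^sup>2 / G\<^sup>2)"
  proof -
    define y where "y = m / G"
    have y0: "y \<ge> 0" unfolding y_def using n0 Gp by simp
    have e5: "(2 * n + r)\<^sup>2 = 5 * (n\<^sup>2 + r\<^sup>2) - (n - 2 * r)\<^sup>2" by (simp add: power2_eq_square algebra_simps)
    have five: "(2 * n + r)\<^sup>2 \<le> 5 * H\<^sup>2" unfolding e5 H2 using a zero_le_power2[of "n - 2 * r"] by (simp add: algebra_simps)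
    define z where "z = (2 * n + r) * r * y / H"
    have "n\<^sup>2 + z\<^sup>2 - 2 * n * z = (n - z)\<^sup>2" by (simp add: power2_diff)
    then have sqz: "2 * n * z \<le> n\<^sup>2 + z\<^sup>2" using zero_le_power2[of "n - z"] by linarith
    have "z\<^sup>2 = (2 * n + r)\<^sup>2 * (r\<^sup>2 * y\<^sup>2) / H\<^sup>2"
      unfolding z_def by (simp add: power_mult_distrib power_divide)
    also have "\<dots> \<le> 5 * H\<^sup>2 * (r\<^sup>2 * y\<^sup>2) / H\<^sup>2"
      using five by (intro divide_right_mono mult_right_mono) auto
    also have "\<dots> = 5 * (r * r) * y\<^sup>2" using Hp by (simp add: power2_eq_square)
    also have "\<dots> \<le> 5 * (r * H) * y\<^sup>2" using rH r0 by (intro mult_right_mono mult_left_mono) auto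
    finally have "z\<^sup>2 \<le> 5 * (r * H) * y\<^sup>2" .
    then have key: "2 * n * ((2 * n + r) * r * y / H) \<le> n\<^sup>2 + 5 * (r * H) * y\<^sup>2" using sqz unfolding z_def by linarith
    have "\<eta> * ((2 * (n * r) + r\<^sup>2) * (n * m)) / (G * H * H) = \<eta> / (2 * H) * (2 * n * ((2 * n + r) * r * y / H))"
      unfolding y_def using Hp Gp by (simp add: field_simps power2_eq_square)
    also have "\<dots> \<le> \<eta> / (2 * H) * (n\<^sup>2 + 5 * (r * H) * y\<^sup>2)"
      using key eta Hp by (intro mult_left_mono) auto
    also have "\<dots> = \<eta> / H * n\<^sup>2 / 2 + 5 / 2 * \<eta> * r * (m\<^sup>2 / G\<^sup>2)"
      unfolding y_def using Hp Gp by (simp add: field_simps power2_eq_square)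
    finally show ?thesis .
  qed
  also have "\<dots> \<le> \<eta> / H * n\<^sup>2 / 2 + 5 / 2 * \<eta> * R * (m\<^sup>2 / G\<^sup>2)"
    using R eta by (intro add_left_mono mult_right_mono mult_left_mono) auto
  finally show ?thesis unfolding n_def m_def .
qed

lemma log_sum:
  fixes x :: "nat \<Rightarrow> real"
  assumes "\<And>s. x s \<ge> 0" and c: "c > 0"
  shows "(\<Sum>s=1..t. x s / (c + (\<Sum>r=1..s. x r))) \<le> ln ((c + (\<Sum>r=1..t. x r)) / c)"
proof (induction t)
  case 0 then show ?case using c by simp
next
  case (Suc t)
  define A where "A = c + (\<Sum>r=1..t. x r)"
  have A: "A > 0" unfolding A_def using c assms(1) by (simp add: add_pos_nonneg sum_nonneg)
  have xs: "x (Suc t) \<ge> 0" by (rule assms)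
  have S: "c + (\<Sum>r=1..Suc t. x r) = A + x (Suc t)" unfolding A_def by simp
  have "x (Suc t) / (A + x (Suc t)) \<le> ln ((A + x (Suc t)) / A)"
  proof -
    have "ln (A / (A + x (Suc t))) \<le> A / (A + x (Suc t)) - 1"
      using A xs by (intro ln_le_minus_one) (simp add: add_pos_nonneg)
    also have "\<dots> = - (x (Suc t) / (A + x (Suc t)))" using A xs by (simp add: field_simps)
    finally show ?thesis using A xs by (simp add: ln_div add_pos_nonneg)
  qed
  moreover have "ln ((A + x (Suc t)) / A) + ln (A / c) = ln ((A + x (Suc t)) / c)"
    using A c xs by (simp add: ln_div add_pos_nonneg)
  moreover have "(\<Sum>s=1..Suc t. x s / (c + (\<Sum>r=1..s. x r))) = (\<Sum>s=1..t. x s / (c + (\<Sum>r=1..s. x r))) + x (Suc t) / (A + x (Suc t))"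
    by (simp add: A_def add.assoc)
  ultimately show ?case using Suc.IH unfolding A_def[symmetric] S by linarith
qed

locale ada =
  fixes f :: "'d::euclidean_space \<Rightarrow> real" and df :: "'d \<Rightarrow> 'd"
    and \<beta> fstar \<eta> \<gamma> \<sigma>0 \<sigma>1 :: real and w1 :: 'd
  assumes grad: "\<And>x. GDERIV f x :> df x"
    and smooth: "\<And>x y. norm (df x - df y) \<le> \<beta> * norm (x - y)"
    and fmin: "\<And>x. fstar \<le> f x"
    and eta: "\<eta> > 0" and gamma: "\<gamma> > 0"
    and sig0: "\<sigma>0 \<ge> 0" and sig1: "\<sigma>1 \<ge> 0"
begin

definition W where "W (g :: nat \<Rightarrow> 'd) (t::nat) = adasgd_w w1 \<eta> \<gamma> g t"
definition Sq where "Sq (g :: nat \<Rightarrow> 'd) (t::nat) = \<gamma>\<^sup>2 + (\<Sum>s=1..t. (norm (g s))\<^sup>2)"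
definition Dl where "Dl (g :: nat \<Rightarrow> 'd) (t::nat) = df (W g t)"
definition rr where "rr (g :: nat \<Rightarrow> 'd) (t::nat) = sqrt (\<sigma>0\<^sup>2 + \<sigma>1\<^sup>2 * (norm (Dl g t))\<^sup>2)"
definition Gh where "Gh (g :: nat \<Rightarrow> 'd) (t::nat) = sqrt (Sq g (t - 1) + (norm (Dl g t))\<^sup>2 + (rr g t)\<^sup>2)"
definition okk where "okk (g :: nat \<Rightarrow> 'd) (F::real) (t::nat) = (\<forall>k\<in>{1..t}. f (W g k) - fstar \<le> F)"
definition Zt where "Zt g F t = (if okk g F t then - (\<eta> / Gh g t * (Dl g t \<bullet> (g t - Dl g t))) else 0)"
definition Vt where "Vt g F t = (if okk g F t then \<eta> / Gh g t * (norm (Dl g t))\<^sup>2 else 0)"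
definition Yt where "Yt g F t = (if okk g F t then \<eta> / Gh g t * norm (Dl g t) * rr g t else 0)"

lemma beta0: "\<beta> \<ge> 0" by (rule beta_nonneg[OF smooth])

lemma W_1: "W g (Suc 0) = w1" by (simp add: W_def)

lemma W_step: "t \<ge> 1 \<Longrightarrow> W g (Suc t) = W g t - (\<eta> / sqrt (Sq g t)) *\<^sub>R g t"
  by (simp add: W_def Sq_def)

lemma Sq_ge: "Sq g t \<ge> \<gamma>\<^sup>2" unfolding Sq_def by (simp add: sum_nonneg)

lemma Sq_pos: "Sq g t > 0" using Sq_ge[of g t] gamma by (smt (verit) zero_less_power2)

lemma Sq_Suc: "Sq g (Suc t) = Sq g t + (norm (g (Suc t)))\<^sup>2" unfolding Sq_def by simp

lemma Sq_mono: "s \<le> t \<Longrightarrow> Sq g s \<le> Sq g t"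
  unfolding Sq_def by (rule add_left_mono, rule sum_mono2) auto

lemma telescope:
  "t \<ge> 1 \<Longrightarrow> f (W g (Suc t)) \<le> f w1 + (\<Sum>s=1..t. - (\<eta> / sqrt (Sq g s)) * (Dl g s \<bullet> g s)
      + \<beta> / 2 * (\<eta>\<^sup>2 * ((norm (g s))\<^sup>2 / Sq g s)))"
proof (induction t rule: dec_induct)
  case base
  have "f (W g (Suc 1)) \<le> f (W g 1) + df (W g 1) \<bullet> (W g (Suc 1) - W g 1) + \<beta> / 2 * (norm (W g (Suc 1) - W g 1))\<^sup>2"
    by (rule descent[OF grad smooth])
  moreover have "W g (Suc 1) - W g 1 = - ((\<eta> / sqrt (Sq g 1)) *\<^sub>R g 1)" using W_step[of 1 g] by simp
  moreover have "(norm ((\<eta> / sqrt (Sq g 1)) *\<^sub>R g 1))\<^sup>2 = \<eta>\<^sup>2 * ((norm (g 1))\<^sup>2 / Sq g 1)"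
    using Sq_pos[of g 1] by (simp add: power_mult_distrib power_divide)
  ultimately show ?case using W_1[of g] by (simp add: Dl_def)
next
  case (step t)
  have "f (W g (Suc (Suc t))) \<le> f (W g (Suc t)) + df (W g (Suc t)) \<bullet> (W g (Suc (Suc t)) - W g (Suc t)) + \<beta> / 2 * (norm (W g (Suc (Suc t)) - W g (Suc t)))\<^sup>2"
    by (rule descent[OF grad smooth])
  moreover have "W g (Suc (Suc t)) - W g (Suc t) = - ((\<eta> / sqrt (Sq g (Suc t))) *\<^sub>R g (Suc t))" using W_step[of "Suc t" g] by simp
  moreover have "(norm ((\<eta> / sqrt (Sq g (Suc t))) *\<^sub>R g (Suc t)))\<^sup>2 = \<eta>\<^sup>2 * ((norm (g (Suc t)))\<^sup>2 / Sq g (Suc t))"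
    using Sq_pos[of g "Suc t"] by (simp add: power_mult_distrib power_divide)
  ultimately show ?case using step.IH step.hyps by (simp add: Dl_def)
qed

lemma step_bound:
  assumes s: "s \<ge> 1" and nz: "norm (g s - Dl g s) \<le> rr g s" and R: "rr g s \<le> R" and ok: "okk g F s"
  shows "- (\<eta> / sqrt (Sq g s)) * (Dl g s \<bullet> g s) \<le> - Vt g F s / 2 + Zt g F s + 5 / 2 * \<eta> * R * ((norm (g s))\<^sup>2 / Sq g s)"
proof -
  define a where "a = Sq g (s - 1)"
  have a: "a > 0" unfolding a_def by (rule Sq_pos)
  have Sqs: "Sq g s = a + (norm (g s))\<^sup>2" unfolding a_def using s Sq_Suc[of g "s - 1"] by simp
  have Gh: "Gh g s = sqrt (a + (norm (Dl g s))\<^sup>2 + (rr g s)\<^sup>2)" unfolding Gh_def a_def ..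
  have Ghp: "Gh g s > 0" unfolding Gh using a by (simp add: add_pos_nonneg)
  have Gs: "(sqrt (a + (norm (g s))\<^sup>2))\<^sup>2 = Sq g s" using Sqs a by (simp add: add_pos_nonneg)
  have key: "(\<eta> / Gh g s - \<eta> / sqrt (Sq g s)) * (Dl g s \<bullet> g s) \<le> \<eta> / Gh g s * (norm (Dl g s))\<^sup>2 / 2 + 5 / 2 * \<eta> * R * ((norm (g s))\<^sup>2 / Sq g s)"
  proof -
    have "(sqrt (Sq g s))\<^sup>2 = Sq g s" using Sq_pos[of g s] by simp
    then show ?thesis using step_ineq[OF a nz R eta] unfolding Gh[symmetric] Sqs[symmetric] by simp
  qed
  have split: "Dl g s \<bullet> g s = (norm (Dl g s))\<^sup>2 + Dl g s \<bullet> (g s - Dl g s)"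
    by (simp add: inner_diff_right power2_norm_eq_inner)
  have "- (\<eta> / sqrt (Sq g s)) * (Dl g s \<bullet> g s) = (\<eta> / Gh g s - \<eta> / sqrt (Sq g s)) * (Dl g s \<bullet> g s) - \<eta> / Gh g s * (Dl g s \<bullet> g s)"
    by (simp add: algebra_simps)
  also have "\<eta> / Gh g s * (Dl g s \<bullet> g s) = Vt g F s - Zt g F s"
    using ok unfolding Vt_def Zt_def split by (simp add: algebra_simps)
  finally have eq: "- (\<eta> / sqrt (Sq g s)) * (Dl g s \<bullet> g s) = (\<eta> / Gh g s - \<eta> / sqrt (Sq g s)) * (Dl g s \<bullet> g s) - (Vt g F s - Zt g F s)" .
  have "Vt g F s = \<eta> / Gh g s * (norm (Dl g s))\<^sup>2" using ok by (simp add: Vt_def)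
  then have "\<eta> / Gh g s * (norm (Dl g s))\<^sup>2 / 2 = Vt g F s / 2" by simp
  then show ?thesis using key eq by linarith
qed

lemma rr_le:
  assumes ok: "okk g F s" and s: "s \<ge> 1"
  shows "rr g s \<le> \<sigma>0 + \<sigma>1 * sqrt (2 * \<beta> * F)"
proof -
  have D: "f (W g s) - fstar \<le> F" using ok s unfolding okk_def by auto
  have n2: "(norm (Dl g s))\<^sup>2 \<le> 2 * \<beta> * (f (W g s) - fstar)" unfolding Dl_def by (rule grad_bound[OF grad smooth fmin])
  also have "\<dots> \<le> 2 * \<beta> * F" using D beta0 by (intro mult_left_mono) auto
  finally have n: "norm (Dl g s) \<le> sqrt (2 * \<beta> * F)" using real_le_rsqrt by blast
  have "rr g s \<le> sqrt (\<sigma>0\<^sup>2) + sqrt (\<sigma>1\<^sup>2 * (norm (Dl g s))\<^sup>2)" unfolding rr_def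
    by (rule sqrt_add_le_add_sqrt) auto
  also have "\<dots> = \<sigma>0 + \<sigma>1 * norm (Dl g s)" using sig0 sig1 by (simp add: real_sqrt_mult)
  also have "\<dots> \<le> \<sigma>0 + \<sigma>1 * sqrt (2 * \<beta> * F)" using n sig1 by (intro add_left_mono mult_left_mono) auto
  finally show ?thesis .
qed

lemma det_main:
  assumes T: "T \<ge> 1"
    and noise: "\<forall>s\<in>{1..T}. norm (g s - Dl g s) \<le> rr g s"
    and conc: "\<forall>t\<in>{1..T}. (\<Sum>s=1..t. Zt g F s) \<le> (\<Sum>s=1..t. Vt g F s) / 2 + 2 * Lln * \<eta> * R"
    and R_def: "R = \<sigma>0 + \<sigma>1 * sqrt (2 * \<beta> * F)" and F0: "F \<ge> 0"
    and Lln: "Lln \<ge> 0" and Cln: "ln (Sq g T / \<gamma>\<^sup>2) \<le> Cln"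
    and Fbig: "(f w1 - fstar) + (2 * Lln + 5 / 2 * Cln) * \<eta> * R + \<beta> / 2 * \<eta>\<^sup>2 * Cln \<le> F"
  shows "\<forall>t\<in>{1..T+1}. f (W g t) - fstar \<le> F"
proof -
  have R0: "R \<ge> 0" unfolding R_def using sig0 sig1 F0 beta0 by simp
  have Cln0: "Cln \<ge> 0"
  proof -
    have "Sq g T / \<gamma>\<^sup>2 \<ge> 1" using Sq_ge[of g T] gamma by simp
    then show ?thesis using Cln by (smt (verit) ln_ge_zero)
  qed
  have base: "f w1 - fstar \<le> F"
  proof -
    have "0 \<le> (2 * Lln + 5 / 2 * Cln) * \<eta> * R" using Lln Cln0 eta R0 by simp
    moreover have "0 \<le> \<beta> / 2 * \<eta>\<^sup>2 * Cln" using beta0 Cln0 by simp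
    ultimately show ?thesis using Fbig by linarith
  qed
  have ind: "t \<ge> 1 \<Longrightarrow> t \<le> T + 1 \<Longrightarrow> \<forall>k\<in>{1..t}. f (W g k) - fstar \<le> F" for t
  proof (induction t rule: dec_induct)
    case base
    then show ?case using \<open>f w1 - fstar \<le> F\<close> W_1[of g] by auto
  next
    case (step t)
    then have tT: "t \<le> T" by simp
    have IH: "\<forall>k\<in>{1..t}. f (W g k) - fstar \<le> F" using step by simp
    have ok: "okk g F s" if "s \<in> {1..t}" for s using IH that unfolding okk_def by auto
    have sb: "- (\<eta> / sqrt (Sq g s)) * (Dl g s \<bullet> g s) \<le> - Vt g F s / 2 + Zt g F s + 5 / 2 * \<eta> * R * ((norm (g s))\<^sup>2 / Sq g s)"
      if "s \<in> {1..t}" for s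
      using step_bound[of s g R F] ok[OF that] that noise tT rr_le[of g F s] R_def by auto
    have "f (W g (Suc t)) \<le> f w1 + (\<Sum>s=1..t. - (\<eta> / sqrt (Sq g s)) * (Dl g s \<bullet> g s)
      + \<beta> / 2 * (\<eta>\<^sup>2 * ((norm (g s))\<^sup>2 / Sq g s)))" by (rule telescope) (use step in simp)
    also have "\<dots> \<le> f w1 + (\<Sum>s=1..t. - Vt g F s / 2 + Zt g F s + (5 / 2 * \<eta> * R + \<beta> / 2 * \<eta>\<^sup>2) * ((norm (g s))\<^sup>2 / Sq g s))"
      using sb by (intro add_left_mono sum_mono) (simp add: algebra_simps)
    also have "\<dots> = f w1 - (\<Sum>s=1..t. Vt g F s) / 2 + (\<Sum>s=1..t. Zt g F s) + (5 / 2 * \<eta> * R + \<beta> / 2 * \<eta>\<^sup>2) * (\<Sum>s=1..t. (norm (g s))\<^sup>2 / Sq g s)"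
      by (simp add: sum.distrib sum_subtractf sum_distrib_left sum_divide_distrib sum_negf)
    also have "\<dots> \<le> f w1 + 2 * Lln * \<eta> * R + (5 / 2 * \<eta> * R + \<beta> / 2 * \<eta>\<^sup>2) * Cln"
    proof -
      have c: "(\<Sum>s=1..t. Zt g F s) \<le> (\<Sum>s=1..t. Vt g F s) / 2 + 2 * Lln * \<eta> * R"
        using conc step tT by simp
      have "(\<Sum>s=1..t. (norm (g s))\<^sup>2 / Sq g s) \<le> ln (Sq g t / \<gamma>\<^sup>2)"
        using log_sum[of "\<lambda>s. (norm (g s))\<^sup>2" "\<gamma>\<^sup>2" t] gamma unfolding Sq_def by simp
      also have "\<dots> \<le> ln (Sq g T / \<gamma>\<^sup>2)"
        using Sq_mono[OF tT, of g] Sq_pos[of g t] gamma by (simp add: divide_right_mono)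
      finally have "(\<Sum>s=1..t. (norm (g s))\<^sup>2 / Sq g s) \<le> Cln" using Cln by linarith
      moreover have "0 \<le> 5 / 2 * \<eta> * R + \<beta> / 2 * \<eta>\<^sup>2" using eta R0 beta0 by simp
      ultimately have "(5 / 2 * \<eta> * R + \<beta> / 2 * \<eta>\<^sup>2) * (\<Sum>s=1..t. (norm (g s))\<^sup>2 / Sq g s) \<le> (5 / 2 * \<eta> * R + \<beta> / 2 * \<eta>\<^sup>2) * Cln"
        by (intro mult_left_mono)
      then show ?thesis using c by linarith
    qed
    finally have "f (W g (Suc t)) - fstar \<le> (f w1 - fstar) + (2 * Lln + 5 / 2 * Cln) * \<eta> * R + \<beta> / 2 * \<eta>\<^sup>2 * Cln"
      by (simp add: algebra_simps)
    then have "f (W g (Suc t)) - fstar \<le> F" using Fbig by linarith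
    then show ?case using IH by (auto simp: le_Suc_eq)
  qed
  show ?thesis using ind[of "T + 1"] T by auto
qed

end

lemma F_alg:
  fixes k L C \<beta> \<eta> \<sigma>0 \<sigma>1 \<Delta> F :: real
  assumes k: "0 < k" "k \<le> 3/4" and L: "L \<ge> 0" and C: "C \<ge> 0" and b: "\<beta> \<ge> 0" and e: "\<eta> > 0"
    and s0: "\<sigma>0 \<ge> 0" and s1: "\<sigma>1 \<ge> 0" and D: "\<Delta> \<ge> 0"
    and F: "F = 2 * \<Delta> + (3 * L + 4 * C) * \<eta> * \<sigma>0 + (9 * L\<^sup>2 + 16 * C\<^sup>2) * \<eta>\<^sup>2 * \<beta> * \<sigma>1\<^sup>2 + \<eta>\<^sup>2 * \<beta> * C"
  shows "\<Delta> + (2 * (k * L) + 5 / 2 * (k * C)) * \<eta> * (\<sigma>0 + \<sigma>1 * sqrt (2 * \<beta> * F)) + \<beta> / 2 * \<eta>\<^sup>2 * (k * C) \<le> F"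
proof -
  have F0: "F \<ge> 0" unfolding F using L C b e s0 s1 D by (simp add: add_nonneg_nonneg)
  define u where "u = sqrt F"
  have u0: "u \<ge> 0" and uF: "u\<^sup>2 = F" unfolding u_def using F0 by auto
  define P where "P = (2 * (k * L) + 5 / 2 * (k * C)) * \<eta>"
  have P0: "P \<ge> 0" unfolding P_def using k L C e by simp
  define q where "q = \<sigma>1 * sqrt (2 * \<beta>)"
  have q2: "q\<^sup>2 = 2 * \<beta> * \<sigma>1\<^sup>2" unfolding q_def using b by (simp add: power_mult_distrib)
  have sq: "sqrt (2 * \<beta> * F) = sqrt (2 * \<beta>) * u" unfolding u_def by (simp add: real_sqrt_mult)
  have "0 \<le> (u - P * q)\<^sup>2" by simp
  then have amgm: "P * (q * u) \<le> u\<^sup>2 / 2 + P\<^sup>2 * q\<^sup>2 / 2" by (simp add: power2_diff power_mult_distrib algebra_simps)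
  have lhs: "\<Delta> + (2 * (k * L) + 5 / 2 * (k * C)) * \<eta> * (\<sigma>0 + \<sigma>1 * sqrt (2 * \<beta> * F)) + \<beta> / 2 * \<eta>\<^sup>2 * (k * C)
      = \<Delta> + P * \<sigma>0 + P * (q * u) + \<beta> / 2 * \<eta>\<^sup>2 * (k * C)"
    unfolding P_def q_def sq by (simp add: algebra_simps)
  have t1: "2 * (P * \<sigma>0) \<le> (3 * L + 4 * C) * \<eta> * \<sigma>0"
  proof -
    have "2 * (2 * (k * L) + 5 / 2 * (k * C)) \<le> 3 * L + 4 * C"
    proof -
      have "(4 * k) * L \<le> 3 * L" using k L by (intro mult_right_mono) auto
      moreover have "(5 * k) * C \<le> 4 * C" using k C by (intro mult_right_mono) auto
      ultimately show ?thesis by (simp add: algebra_simps)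
    qed
    then show ?thesis unfolding P_def using e s0 by (simp add: mult_right_mono mult.assoc[symmetric])
  qed
  have t2: "P\<^sup>2 * q\<^sup>2 \<le> (9 * L\<^sup>2 + 16 * C\<^sup>2) * \<eta>\<^sup>2 * \<beta> * \<sigma>1\<^sup>2"
  proof -
    have a1: "(2 * L + 5 / 2 * C)\<^sup>2 \<le> 8 * L\<^sup>2 + 25 / 2 * C\<^sup>2"
    proof -
      have "0 \<le> (2 * L - 5 / 2 * C)\<^sup>2" by simp
      moreover have "(2 * L - 5 / 2 * C)\<^sup>2 = 4 * L\<^sup>2 - 10 * (L * C) + 25 / 4 * C\<^sup>2" by (simp add: power2_eq_square algebra_simps)
      moreover have "(2 * L + 5 / 2 * C)\<^sup>2 = 4 * L\<^sup>2 + 10 * (L * C) + 25 / 4 * C\<^sup>2" by (simp add: power2_eq_square algebra_simps)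
      ultimately show ?thesis by linarith
    qed
    have k2: "k\<^sup>2 \<le> 9 / 16" using k power_mono[of k "3/4" 2] by (simp add: power_divide)
    have "P = k * \<eta> * (2 * L + 5 / 2 * C)" unfolding P_def by (simp add: algebra_simps)
    then have "P\<^sup>2 = k\<^sup>2 * \<eta>\<^sup>2 * (2 * L + 5 / 2 * C)\<^sup>2" by (simp add: power_mult_distrib)
    also have "\<dots> \<le> k\<^sup>2 * \<eta>\<^sup>2 * (8 * L\<^sup>2 + 25 / 2 * C\<^sup>2)" using a1 by (intro mult_left_mono) auto
    also have "\<dots> \<le> 9 / 16 * \<eta>\<^sup>2 * (8 * L\<^sup>2 + 25 / 2 * C\<^sup>2)" using k2 by (intro mult_right_mono) auto
    finally have "P\<^sup>2 * q\<^sup>2 \<le> 9 / 16 * \<eta>\<^sup>2 * (8 * L\<^sup>2 + 25 / 2 * C\<^sup>2) * (2 * \<beta> * \<sigma>1\<^sup>2)"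
      unfolding q2 using b by (intro mult_right_mono) auto
    also have "\<dots> = (9 * L\<^sup>2 + 225 / 16 * C\<^sup>2) * \<eta>\<^sup>2 * \<beta> * \<sigma>1\<^sup>2" by (simp add: algebra_simps)
    also have "\<dots> \<le> (9 * L\<^sup>2 + 16 * C\<^sup>2) * \<eta>\<^sup>2 * \<beta> * \<sigma>1\<^sup>2" using b C by (intro mult_right_mono) auto
    finally show ?thesis .
  qed
  have t3: "\<beta> * \<eta>\<^sup>2 * (k * C) \<le> \<eta>\<^sup>2 * \<beta> * C"
  proof -
    have "k * C \<le> C" using k C by (simp add: mult_left_le_one_le)
    then have "(\<beta> * \<eta>\<^sup>2) * (k * C) \<le> (\<beta> * \<eta>\<^sup>2) * C" using b by (intro mult_left_mono) auto
    then show ?thesis by (simp add: algebra_simps)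
  qed
  define A1 where "A1 = (3 * L + 4 * C) * \<eta> * \<sigma>0"
  define A2 where "A2 = (9 * L\<^sup>2 + 16 * C\<^sup>2) * \<eta>\<^sup>2 * \<beta> * \<sigma>1\<^sup>2"
  define A3 where "A3 = \<eta>\<^sup>2 * \<beta> * C"
  define B where "B = \<beta> * \<eta>\<^sup>2 * (k * C)"
  have FA: "F = 2 * \<Delta> + A1 + A2 + A3" unfolding F A1_def A2_def A3_def ..
  have lB: "\<beta> / 2 * \<eta>\<^sup>2 * (k * C) = B / 2" unfolding B_def by simp
  show ?thesis using lhs lB amgm t1[folded A1_def] t2[folded A2_def] t3[folded A3_def B_def] uF FA by linarith
qed

context ada
begin

lemma step_le: "t \<ge> 1 \<Longrightarrow> norm (W g (Suc t) - W g t) \<le> \<eta>"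
proof -
  assume t: "t \<ge> 1"
  have Sqt: "Sq g t = Sq g (t - 1) + (norm (g t))\<^sup>2" using t Sq_Suc[of g "t - 1"] by simp
  have "(norm (g t))\<^sup>2 \<le> Sq g t" using Sqt Sq_pos[of g "t - 1"] by simp
  then have gn: "norm (g t) \<le> sqrt (Sq g t)" using real_le_rsqrt by blast
  have sp: "sqrt (Sq g t) > 0" using Sq_pos[of g t] by simp
  have "norm (W g (Suc t) - W g t) = \<eta> / sqrt (Sq g t) * norm (g t)" using W_step[OF t, of g] eta sp by simp
  also have "\<dots> \<le> \<eta> / sqrt (Sq g t) * sqrt (Sq g t)" using gn eta sp by (intro mult_left_mono) auto
  also have "\<dots> = \<eta>" using sp by simp
  finally show ?thesis .
qed

lemma dist_w1: "t \<ge> 1 \<Longrightarrow> norm (W g t - w1) \<le> \<eta> * (real t - 1)"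
proof (induction t rule: dec_induct)
  case base then show ?case using W_1[of g] by simp
next
  case (step t)
  have "norm (W g (Suc t) - w1) \<le> norm (W g (Suc t) - W g t) + norm (W g t - w1)"
    by (rule norm_diff_triangle_le[OF order_refl order_refl])
  also have "\<dots> \<le> \<eta> + \<eta> * (real t - 1)" using step_le[OF step.hyps(1), of g] step.IH by simp
  finally show ?case by (simp add: algebra_simps)
qed

lemma Dl_bound: "t \<ge> 1 \<Longrightarrow> t \<le> T \<Longrightarrow> norm (Dl g t) \<le> norm (df w1) + \<beta> * \<eta> * real T"
proof -
  assume t: "t \<ge> 1" "t \<le> T"
  have "norm (Dl g t) \<le> norm (df w1) + norm (Dl g t - df w1)" by (rule norm_triangle_sub)
  also have "norm (Dl g t - df w1) \<le> \<beta> * norm (W g t - w1)" unfolding Dl_def by (rule smooth)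
  also have "\<dots> \<le> \<beta> * (\<eta> * (real t - 1))" using dist_w1[OF t(1), of g] beta0 by (intro mult_left_mono) auto
  also have "\<dots> \<le> \<beta> * (\<eta> * real T)" using t eta beta0 by (intro mult_left_mono) auto
  finally show ?thesis by (simp add: mult.assoc)
qed

lemma g_bound:
  assumes t: "t \<ge> 1" "t \<le> T" and nz: "norm (g t - Dl g t) \<le> rr g t"
  shows "(norm (g t))\<^sup>2 \<le> 2 * \<sigma>0\<^sup>2 + 8 * (1 + \<sigma>1\<^sup>2) * (\<beta> * (f w1 - fstar) + \<eta>\<^sup>2 * \<beta>\<^sup>2 * (real T)\<^sup>2)"
proof -
  define n where "n = norm (Dl g t)"
  define r where "r = rr g t"
  have n0: "n \<ge> 0" unfolding n_def by simp
  have r2: "r\<^sup>2 = \<sigma>0\<^sup>2 + \<sigma>1\<^sup>2 * n\<^sup>2" unfolding r_def rr_def n_def by (simp add: add_nonneg_nonneg)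
  have r0: "r \<ge> 0" unfolding r_def rr_def by (simp add: add_nonneg_nonneg)
  have "norm (g t) \<le> n + r" unfolding n_def r_def using nz norm_triangle_sub[of "g t" "Dl g t"] by linarith
  then have "(norm (g t))\<^sup>2 \<le> (n + r)\<^sup>2" by (simp add: power_mono)
  also have "\<dots> \<le> 2 * n\<^sup>2 + 2 * r\<^sup>2"
  proof -
    have "0 \<le> (n - r)\<^sup>2" by simp
    then show ?thesis by (simp add: power2_sum power2_diff algebra_simps)
  qed
  also have "\<dots> = 2 * \<sigma>0\<^sup>2 + 2 * (1 + \<sigma>1\<^sup>2) * n\<^sup>2" unfolding r2 by (simp add: algebra_simps)
  also have "\<dots> \<le> 2 * \<sigma>0\<^sup>2 + 2 * (1 + \<sigma>1\<^sup>2) * (4 * (\<beta> * (f w1 - fstar)) + 2 * (\<eta>\<^sup>2 * \<beta>\<^sup>2 * (real T)\<^sup>2))"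
  proof -
    define a where "a = norm (df w1)"
    define b where "b = \<beta> * \<eta> * real T"
    have "n \<le> a + b" unfolding n_def a_def b_def by (rule Dl_bound[OF t])
    then have "n\<^sup>2 \<le> (a + b)\<^sup>2" using n0 by (simp add: power_mono)
    also have "\<dots> \<le> 2 * a\<^sup>2 + 2 * b\<^sup>2"
    proof -
      have "0 \<le> (a - b)\<^sup>2" by simp
      then show ?thesis by (simp add: power2_sum power2_diff algebra_simps)
    qed
    also have "a\<^sup>2 \<le> 2 * (\<beta> * (f w1 - fstar))" unfolding a_def using grad_bound[OF grad smooth fmin, of w1] by simp
    also have "b\<^sup>2 = \<eta>\<^sup>2 * \<beta>\<^sup>2 * (real T)\<^sup>2" unfolding b_def by (simp add: power_mult_distrib)
    finally have "n\<^sup>2 \<le> 4 * (\<beta> * (f w1 - fstar)) + 2 * (\<eta>\<^sup>2 * \<beta>\<^sup>2 * (real T)\<^sup>2)" by simp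
    moreover have "0 \<le> 2 * (1 + \<sigma>1\<^sup>2)" by simp
    ultimately show ?thesis by (intro add_left_mono mult_left_mono)
  qed
  also have "\<dots> \<le> 2 * \<sigma>0\<^sup>2 + 8 * (1 + \<sigma>1\<^sup>2) * (\<beta> * (f w1 - fstar) + \<eta>\<^sup>2 * \<beta>\<^sup>2 * (real T)\<^sup>2)"
  proof -
    have "0 \<le> \<eta>\<^sup>2 * \<beta>\<^sup>2 * (real T)\<^sup>2" by simp
    moreover have "0 \<le> 1 + \<sigma>1\<^sup>2" by simp
    ultimately have "(1 + \<sigma>1\<^sup>2) * (4 * (\<eta>\<^sup>2 * \<beta>\<^sup>2 * (real T)\<^sup>2)) \<le> (1 + \<sigma>1\<^sup>2) * (8 * (\<eta>\<^sup>2 * \<beta>\<^sup>2 * (real T)\<^sup>2))"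
      by (intro mult_left_mono) auto
    then show ?thesis by (simp add: algebra_simps)
  qed
  finally show ?thesis .
qed

lemma Sq_bound:
  assumes noise: "\<forall>s\<in>{1..T}. norm (g s - Dl g s) \<le> rr g s"
  shows "Sq g T \<le> \<gamma>\<^sup>2 + (2 * \<sigma>0\<^sup>2 * real T + 8 * (1 + \<sigma>1\<^sup>2) * (\<eta>\<^sup>2 * \<beta>\<^sup>2 * real T ^ 3 + \<beta> * (f w1 - fstar) * real T))"
proof -
  define K where "K = 2 * \<sigma>0\<^sup>2 + 8 * (1 + \<sigma>1\<^sup>2) * (\<beta> * (f w1 - fstar) + \<eta>\<^sup>2 * \<beta>\<^sup>2 * (real T)\<^sup>2)"
  have "(\<Sum>s=1..T. (norm (g s))\<^sup>2) \<le> (\<Sum>s=1..T. K)"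
    using g_bound noise unfolding K_def by (intro sum_mono) auto
  also have "\<dots> = real T * K" by simp
  also have "\<dots> = 2 * \<sigma>0\<^sup>2 * real T + 8 * (1 + \<sigma>1\<^sup>2) * (\<eta>\<^sup>2 * \<beta>\<^sup>2 * real T ^ 3 + \<beta> * (f w1 - fstar) * real T)"
    unfolding K_def by (simp add: algebra_simps power2_eq_square power3_eq_cube)
  finally show ?thesis unfolding Sq_def by simp
qed

end

definition Hm :: "'m measure \<Rightarrow> (nat \<Rightarrow> 'm \<Rightarrow> 'd::euclidean_space) \<Rightarrow> nat \<Rightarrow> bool" where
  "Hm N G k = (\<forall>s. 1 \<le> s \<longrightarrow> s < k \<longrightarrow> G s \<in> borel_measurable N)"

lemma Hm_mono: "Hm N G k \<Longrightarrow> j \<le> k \<Longrightarrow> Hm N G j" unfolding Hm_def by auto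

context ada
begin

lemma df_cont: "continuous_on UNIV df"
  unfolding continuous_on_iff
proof (intro ballI allI impI)
  fix x :: 'd and e :: real assume e: "e > 0"
  show "\<exists>d>0. \<forall>y\<in>UNIV. dist y x < d \<longrightarrow> dist (df y) (df x) < e"
  proof (intro exI[of _ "e / (\<beta> + 1)"] conjI ballI impI)
    show "e / (\<beta> + 1) > 0" using e beta0 by simp
    fix y assume y: "dist y x < e / (\<beta> + 1)"
    have "dist (df y) (df x) \<le> \<beta> * dist y x" using smooth[of y x] by (simp add: dist_norm)
    also have "\<dots> \<le> \<beta> * (e / (\<beta> + 1))" using y beta0 by (intro mult_left_mono) auto
    also have "\<dots> < e" using e beta0 by (simp add: field_simps)
    finally show "dist (df y) (df x) < e" .
  qed
qed

lemma df_borel[measurable]: "df \<in> borel_measurable borel"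
  by (rule borel_measurable_continuous_onI[OF df_cont])

lemma f_cont: "continuous_on UNIV f"
proof (rule continuous_at_imp_continuous_on, intro ballI)
  fix x show "isCont f x" using grad[of x] unfolding gderiv_def by (rule has_derivative_continuous)
qed

lemma f_borel[measurable]: "f \<in> borel_measurable borel"
  by (rule borel_measurable_continuous_onI[OF f_cont])

context
  fixes N :: "'m measure" and G :: "nat \<Rightarrow> 'm \<Rightarrow> 'd"
begin

lemma meas_Sq: "Hm N G (Suc k) \<Longrightarrow> (\<lambda>\<omega>. Sq (\<lambda>s. G s \<omega>) k) \<in> borel_measurable N"
proof -
  assume H: "Hm N G (Suc k)"
  have [measurable]: "G s \<in> borel_measurable N" if "s \<in> {1..k}" for s using H that unfolding Hm_def by auto
  show ?thesis unfolding Sq_def by measurable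
qed

lemma meas_W: "Hm N G k \<Longrightarrow> (\<lambda>\<omega>. W (\<lambda>s. G s \<omega>) k) \<in> borel_measurable N"
proof (induction k)
  case 0 then show ?case by (simp add: W_def)
next
  case (Suc k)
  show ?case
  proof (cases "k = 0")
    case True then show ?thesis using W_1 by simp
  next
    case False
    then have k1: "k \<ge> 1" by simp
    have [measurable]: "(\<lambda>\<omega>. W (\<lambda>s. G s \<omega>) k) \<in> borel_measurable N" using Suc Hm_mono[of N G "Suc k" k] by simp
    have [measurable]: "(\<lambda>\<omega>. Sq (\<lambda>s. G s \<omega>) k) \<in> borel_measurable N" using Suc meas_Sq by simp
    have [measurable]: "G k \<in> borel_measurable N" using Suc k1 unfolding Hm_def by auto
    have "(\<lambda>\<omega>. W (\<lambda>s. G s \<omega>) (Suc k)) = (\<lambda>\<omega>. W (\<lambda>s. G s \<omega>) k - (\<eta> / sqrt (Sq (\<lambda>s. G s \<omega>) k)) *\<^sub>R G k \<omega>)"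
      using W_step[OF k1] by simp
    then show ?thesis by simp
  qed
qed

lemma meas_Dl: "Hm N G k \<Longrightarrow> (\<lambda>\<omega>. Dl (\<lambda>s. G s \<omega>) k) \<in> borel_measurable N"
proof -
  assume "Hm N G k"
  note [measurable] = meas_W[OF this]
  show ?thesis unfolding Dl_def by measurable
qed

lemma meas_rr: "Hm N G k \<Longrightarrow> (\<lambda>\<omega>. rr (\<lambda>s. G s \<omega>) k) \<in> borel_measurable N"
proof -
  assume "Hm N G k"
  note [measurable] = meas_Dl[OF this]
  show ?thesis unfolding rr_def by measurable
qed

lemma meas_Gh: "Hm N G k \<Longrightarrow> (\<lambda>\<omega>. Gh (\<lambda>s. G s \<omega>) k) \<in> borel_measurable N"
proof -
  assume H: "Hm N G k"
  note [measurable] = meas_Dl[OF H] meas_rr[OF H]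
  have [measurable]: "(\<lambda>\<omega>. Sq (\<lambda>s. G s \<omega>) (k - 1)) \<in> borel_measurable N"
    using meas_Sq[of "k - 1"] H Hm_mono[of N G k "Suc (k - 1)"]
    by (cases k) (auto simp: Sq_def)
  show ?thesis unfolding Gh_def by measurable
qed

lemma meas_okk: "Hm N G k \<Longrightarrow> Measurable.pred N (\<lambda>\<omega>. okk (\<lambda>s. G s \<omega>) F k)"
proof -
  assume H: "Hm N G k"
  have [measurable]: "(\<lambda>\<omega>. W (\<lambda>s. G s \<omega>) j) \<in> borel_measurable N" if "j \<in> {1..k}" for j
    using meas_W Hm_mono[OF H] that by auto
  show ?thesis unfolding okk_def by measurable
qed

lemma meas_Vt: "Hm N G k \<Longrightarrow> (\<lambda>\<omega>. Vt (\<lambda>s. G s \<omega>) F k) \<in> borel_measurable N"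
proof -
  assume H: "Hm N G k"
  note [measurable] = meas_Dl[OF H] meas_Gh[OF H] meas_okk[OF H]
  show ?thesis unfolding Vt_def by measurable
qed

lemma meas_Yt: "Hm N G k \<Longrightarrow> (\<lambda>\<omega>. Yt (\<lambda>s. G s \<omega>) F k) \<in> borel_measurable N"
proof -
  assume H: "Hm N G k"
  note [measurable] = meas_Dl[OF H] meas_Gh[OF H] meas_okk[OF H] meas_rr[OF H]
  show ?thesis unfolding Yt_def by measurable
qed

lemma meas_Zt: "Hm N G (Suc k) \<Longrightarrow> k \<ge> 1 \<Longrightarrow> (\<lambda>\<omega>. Zt (\<lambda>s. G s \<omega>) F k) \<in> borel_measurable N"
proof -
  assume H: "Hm N G (Suc k)" and k: "k \<ge> 1"
  have H': "Hm N G k" using Hm_mono[OF H] by simp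
  note [measurable] = meas_Dl[OF H'] meas_Gh[OF H'] meas_okk[OF H']
  have [measurable]: "G k \<in> borel_measurable N" using H k unfolding Hm_def by auto
  show ?thesis unfolding Zt_def by measurable
qed

end
end

lemma exp_ineq: "exp (x::real) \<le> x + exp (x\<^sup>2)"
proof -
  have e2: "1 + x\<^sup>2 \<le> exp (x\<^sup>2)" using exp_ge_add_one_self[of "x\<^sup>2"] by simp
  show ?thesis
  proof (cases "x \<ge> 1")
    case True
    then have "x \<le> x\<^sup>2" by (simp add: power2_eq_square)
    then have "exp x \<le> exp (x\<^sup>2)" by simp
    then show ?thesis using True by linarith
  next
    case False
    have "exp x \<le> 1 + x + x\<^sup>2"
    proof (cases "x \<ge> 0")
      case True then show ?thesis using False exp_bound[of x] by simp
    next
      case neg: False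
      show ?thesis
      proof (cases "x \<le> -1")
        case True
        have "exp x \<le> 1" using neg by simp
        moreover have "0 \<le> x * (1 + x)" using True by (simp add: mult_nonpos_nonpos)
        moreover have "x * (1 + x) = x + x\<^sup>2" by (simp add: power2_eq_square algebra_simps)
        ultimately show ?thesis by linarith
      next
        case False
        define a where "a = - x"
        have a: "0 \<le> a" "a \<le> 1" using False neg unfolding a_def by auto
        have "1 + a \<le> exp a" by (rule exp_ge_add_one_self)
        have "exp x = 1 / exp a" unfolding a_def by (simp add: exp_minus inverse_eq_divide)
        also have "\<dots> \<le> 1 / (1 + a)" using \<open>1 + a \<le> exp a\<close> a by (intro divide_left_mono) auto
        also have "\<dots> \<le> 1 - a + a\<^sup>2"
        proof -
          have "1 \<le> (1 + a) * (1 - a + a\<^sup>2)" using a by (simp add: power2_eq_square algebra_simps)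
          then show ?thesis using a by (simp add: field_simps)
        qed
        finally show ?thesis unfolding a_def by simp
      qed
    qed
    then show ?thesis using e2 by linarith
  qed
qed

locale ada_prob = ada f df \<beta> fstar \<eta> \<gamma> \<sigma>0 \<sigma>1 w1
  for f :: "'d::euclidean_space \<Rightarrow> real" and df \<beta> fstar \<eta> \<gamma> \<sigma>0 \<sigma>1 w1 +
  fixes M :: "'m measure" and G :: "nat \<Rightarrow> 'm \<Rightarrow> 'd" and T :: nat
  assumes M: "prob_space M"
    and G_meas: "\<And>t. G t \<in> borel_measurable M"
    and unbiased: "\<And>t b. t \<in> {1..T} \<Longrightarrow> b \<in> Basis \<Longrightarrow>
        AE \<omega> in M. real_cond_exp M (adasgd_filt M G t) (\<lambda>\<omega>. G t \<omega> \<bullet> b) \<omega>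
                    = df (adasgd_w w1 \<eta> \<gamma> (\<lambda>s. G s \<omega>) t) \<bullet> b"
    and noise: "\<And>t. t \<in> {1..T} \<Longrightarrow>
        AE \<omega> in M. (norm (G t \<omega> - df (adasgd_w w1 \<eta> \<gamma> (\<lambda>s. G s \<omega>) t)))\<^sup>2
                    \<le> \<sigma>0\<^sup>2 + \<sigma>1\<^sup>2 * (norm (df (adasgd_w w1 \<eta> \<gamma> (\<lambda>s. G s \<omega>) t)))\<^sup>2"
begin

interpretation P: prob_space M by (rule M)

definition Fl where "Fl t = adasgd_filt M G t"

lemma Fl_gen_sub: "(\<Union>s\<in>{1..<t}. {G s -` A \<inter> space M | A. A \<in> sets borel}) \<subseteq> Pow (space M)"
  by auto

lemma Fl_space: "space (Fl t) = space M"
  unfolding Fl_def adasgd_filt_def by (rule space_measure_of_conv)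

lemma Fl_sets_eq: "sets (Fl t) = sigma_sets (space M) (\<Union>s\<in>{1..<t}. {G s -` A \<inter> space M | A. A \<in> sets borel})"
  unfolding Fl_def adasgd_filt_def by (rule sets_measure_of[OF Fl_gen_sub])

lemma Fl_sets: "sets (Fl t) \<subseteq> sets M"
proof -
  have "(\<Union>s\<in>{1..<t}. {G s -` A \<inter> space M | A. A \<in> sets borel}) \<subseteq> sets M"
    using G_meas by (auto intro: measurable_sets)
  then show ?thesis unfolding Fl_sets_eq by (rule sets.sigma_sets_subset)
qed

lemma Fl_sub: "subalgebra M (Fl t)"
  unfolding subalgebra_def using Fl_space Fl_sets by simp

lemma Fl_sfs: "sigma_finite_subalgebra M (Fl t)"
  by (rule finite_measure_subalgebra_is_sigma_finite)
    (simp add: finite_measure_subalgebra_def finite_measure_subalgebra_axioms_def Fl_sub P.finite_measure_axioms)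

lemma Fl_G: "1 \<le> s \<Longrightarrow> s < t \<Longrightarrow> G s \<in> borel_measurable (Fl t)"
proof (rule measurableI)
  fix A :: "'d set" assume s: "1 \<le> s" "s < t" and A: "A \<in> sets borel"
  have "G s -` A \<inter> space M \<in> (\<Union>s\<in>{1..<t}. {G s -` A \<inter> space M | A. A \<in> sets borel})"
    using s A by (intro UN_I[of s]) auto
  then show "G s -` A \<inter> space (Fl t) \<in> sets (Fl t)" unfolding Fl_sets_eq Fl_space
    by (rule sigma_sets.Basic)
qed simp

lemma Hm_Fl: "Hm (Fl t) G t" unfolding Hm_def using Fl_G by auto

lemma Hm_M: "Hm M G k" unfolding Hm_def using G_meas by auto

lemma noise': "t \<in> {1..T} \<Longrightarrow> AE \<omega> in M. norm (G t \<omega> - Dl (\<lambda>s. G s \<omega>) t) \<le> rr (\<lambda>s. G s \<omega>) t"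
proof -
  assume t: "t \<in> {1..T}"
  show ?thesis using noise[OF t]
  proof eventually_elim
    case (elim \<omega>)
    then show ?case unfolding rr_def Dl_def W_def using real_le_rsqrt by blast
  qed
qed

lemma unbiased': "t \<in> {1..T} \<Longrightarrow> b \<in> Basis \<Longrightarrow>
    AE \<omega> in M. real_cond_exp M (Fl t) (\<lambda>\<omega>. G t \<omega> \<bullet> b) \<omega> = Dl (\<lambda>s. G s \<omega>) t \<bullet> b"
  using unbiased unfolding Fl_def Dl_def W_def by simp

end

context ada
begin

lemma Gh_ge: "\<gamma> \<le> Gh g t"
proof -
  have "\<gamma>\<^sup>2 \<le> Sq g (t - 1) + (norm (Dl g t))\<^sup>2 + (rr g t)\<^sup>2"
    using Sq_ge[of g "t - 1"] zero_le_power2[of "norm (Dl g t)"] zero_le_power2[of "rr g t"] by linarith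
  then have "sqrt (\<gamma>\<^sup>2) \<le> Gh g t" unfolding Gh_def by (rule real_sqrt_le_mono)
  then show ?thesis using gamma by simp
qed

lemma Gh_pos: "Gh g t > 0" using Gh_ge[of g t] gamma by simp

lemma rr_Gh: "rr g t \<le> Gh g t"
proof -
  have "(rr g t)\<^sup>2 \<le> Sq g (t - 1) + (norm (Dl g t))\<^sup>2 + (rr g t)\<^sup>2" using Sq_pos[of g "t - 1"] by simp
  then have "sqrt ((rr g t)\<^sup>2) \<le> Gh g t" unfolding Gh_def by (rule real_sqrt_le_mono)
  moreover have "rr g t \<ge> 0" unfolding rr_def by (simp add: add_nonneg_nonneg)
  ultimately show ?thesis by simp
qed

lemma rr_nn: "rr g t \<ge> 0" unfolding rr_def by (simp add: add_nonneg_nonneg)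

lemma rr_le2: "rr g t \<le> \<sigma>0 + \<sigma>1 * norm (Dl g t)"
proof -
  have "rr g t \<le> sqrt (\<sigma>0\<^sup>2) + sqrt (\<sigma>1\<^sup>2 * (norm (Dl g t))\<^sup>2)" unfolding rr_def
    by (rule sqrt_add_le_add_sqrt) auto
  also have "\<dots> = \<sigma>0 + \<sigma>1 * norm (Dl g t)" using sig0 sig1 by (simp add: real_sqrt_mult)
  finally show ?thesis .
qed

lemma Yt_nn: "Yt g F t \<ge> 0"
  unfolding Yt_def using Gh_pos[of g t] eta rr_nn[of g t] by simp

lemma Vt_nn: "Vt g F t \<ge> 0"
  unfolding Vt_def using Gh_pos[of g t] eta by simp

lemma Yt_bd:
  assumes t: "t \<ge> 1" "t \<le> T"
  shows "Yt g F t \<le> \<eta> / \<gamma> * (norm (df w1) + \<beta> * \<eta> * real T) * (\<sigma>0 + \<sigma>1 * (norm (df w1) + \<beta> * \<eta> * real T))"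
proof -
  define B where "B = norm (df w1) + \<beta> * \<eta> * real T"
  have n: "norm (Dl g t) \<le> B" unfolding B_def by (rule Dl_bound[OF t])
  have r: "rr g t \<le> \<sigma>0 + \<sigma>1 * B" using rr_le2[of g t] n sig1 by (smt (verit) mult_left_mono)
  have e: "\<eta> / Gh g t \<le> \<eta> / \<gamma>" using Gh_ge[of g t] gamma eta by (simp add: frac_le)
  have "\<eta> / Gh g t * norm (Dl g t) * rr g t \<le> \<eta> / \<gamma> * B * (\<sigma>0 + \<sigma>1 * B)"
    using e n r eta Gh_pos[of g t] rr_nn[of g t] gamma order_trans[OF norm_ge_zero n]
    by (intro mult_mono) auto
  moreover have "0 \<le> \<eta> / \<gamma> * B * (\<sigma>0 + \<sigma>1 * B)"
    using order_trans[OF norm_ge_zero n] eta gamma sig0 sig1 by simp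
  ultimately show ?thesis unfolding Yt_def B_def by auto
qed

lemma Zt_abs:
  assumes nz: "norm (g t - Dl g t) \<le> rr g t"
  shows "\<bar>Zt g F t\<bar> \<le> Yt g F t"
proof (cases "okk g F t")
  case True
  have "\<bar>Dl g t \<bullet> (g t - Dl g t)\<bar> \<le> norm (Dl g t) * norm (g t - Dl g t)" by (rule Cauchy_Schwarz_ineq2)
  also have "\<dots> \<le> norm (Dl g t) * rr g t" using nz by (intro mult_left_mono) auto
  finally have "\<eta> / Gh g t * \<bar>Dl g t \<bullet> (g t - Dl g t)\<bar> \<le> \<eta> / Gh g t * (norm (Dl g t) * rr g t)"
    using eta Gh_pos[of g t] by (intro mult_left_mono) auto
  then show ?thesis using True eta Gh_pos[of g t] unfolding Zt_def Yt_def by (simp add: abs_mult mult.assoc)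
next
  case False then show ?thesis unfolding Zt_def Yt_def by simp
qed

lemma lamY:
  assumes R: "R > 0" "R = \<sigma>0 + \<sigma>1 * sqrt (2 * \<beta> * F)" and t: "t \<ge> 1"
  shows "1 / (2 * \<eta> * R) * (Yt g F t)\<^sup>2 \<le> Vt g F t / 2"
proof (cases "okk g F t")
  case True
  define n where "n = norm (Dl g t)"
  define r where "r = rr g t"
  define H where "H = Gh g t"
  have H: "H > 0" unfolding H_def by (rule Gh_pos)
  have rR: "r \<le> R" unfolding r_def using rr_le[OF True t] R by simp
  have rH: "r \<le> H" unfolding r_def H_def by (rule rr_Gh)
  have r0: "r \<ge> 0" unfolding r_def by (rule rr_nn)
  have rr2: "r * r \<le> R * H" using rR rH r0 by (intro mult_mono) auto
  have "1 / (2 * \<eta> * R) * (Yt g F t)\<^sup>2 = \<eta> * n\<^sup>2 * (r * r) / (2 * R * H * H)"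
    using True eta R(1) H unfolding Yt_def n_def r_def H_def by (simp add: power2_eq_square field_simps)
  also have "\<dots> \<le> \<eta> * n\<^sup>2 * (R * H) / (2 * R * H * H)"
    using rr2 eta R(1) H by (intro divide_right_mono mult_left_mono) auto
  also have "\<dots> = Vt g F t / 2"
    using True eta R(1) H unfolding Vt_def n_def H_def by (simp add: power2_eq_square field_simps)
  finally show ?thesis .
next
  case False then show ?thesis unfolding Yt_def Vt_def by simp
qed

end

context ada_prob
begin

interpretation P: prob_space M by (rule M)

definition "Bn = norm (df w1) + \<beta> * \<eta> * real T"
definition "BY = \<eta> / \<gamma> * Bn * (\<sigma>0 + \<sigma>1 * Bn)"
definition "BG = Bn + (\<sigma>0 + \<sigma>1 * Bn)"

lemma Bn_nn: "Bn \<ge> 0" unfolding Bn_def using beta0 eta by simp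
lemma BY_nn: "BY \<ge> 0" unfolding BY_def using Bn_nn eta gamma sig0 sig1 by simp

lemma intgr:
  assumes a1: "(u :: 'm \<Rightarrow> real) \<in> borel_measurable M" and a2: "AE \<omega> in M. \<bar>u \<omega>\<bar> \<le> B"
  shows "integrable M u"
proof -
  have "AE \<omega> in M. norm (u \<omega>) \<le> B" using a2 by simp
  then show ?thesis using a1 by (rule P.integrable_const_bound)
qed

lemma noise_all: "AE \<omega> in M. \<forall>t\<in>{1..T}. norm (G t \<omega> - Dl (\<lambda>s. G s \<omega>) t) \<le> rr (\<lambda>s. G s \<omega>) t"
proof (rule AE_finite_allI)
  show "finite {1..T}" by simp
  fix t assume "t \<in> {1..T}"
  then show "AE \<omega> in M. norm (G t \<omega> - Dl (\<lambda>s. G s \<omega>) t) \<le> rr (\<lambda>s. G s \<omega>) t" by (rule noise')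
qed

lemma Dl_bd: "t \<in> {1..T} \<Longrightarrow> norm (Dl g t) \<le> Bn"
proof -
  assume t: "t \<in> {1..T}"
  then have "t \<ge> 1" "t \<le> T" by auto
  then show ?thesis unfolding Bn_def by (rule Dl_bound)
qed

lemma G_bd: "t \<in> {1..T} \<Longrightarrow> AE \<omega> in M. norm (G t \<omega>) \<le> BG"
proof -
  assume t: "t \<in> {1..T}"
  show ?thesis using noise'[OF t]
  proof eventually_elim
    case (elim \<omega>)
    have n: "norm (Dl (\<lambda>s. G s \<omega>) t) \<le> Bn" using Dl_bd[OF t] .
    have "norm (G t \<omega>) \<le> norm (Dl (\<lambda>s. G s \<omega>) t) + norm (G t \<omega> - Dl (\<lambda>s. G s \<omega>) t)" by (rule norm_triangle_sub)
    also have "\<dots> \<le> Bn + rr (\<lambda>s. G s \<omega>) t" using n elim by simp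
    also have "rr (\<lambda>s. G s \<omega>) t \<le> \<sigma>0 + \<sigma>1 * Bn" using rr_le2[of "\<lambda>s. G s \<omega>" t] n sig1
      by (smt (verit) mult_left_mono)
    finally show ?case unfolding BG_def by simp
  qed
qed

lemma zero_mean:
  assumes t: "t \<in> {1..T}" and hm: "h \<in> borel_measurable (Fl t)" and hb: "AE \<omega> in M. \<bar>h \<omega>\<bar> \<le> Bh"
  shows "(\<integral>\<omega>. h \<omega> * Zt (\<lambda>s. G s \<omega>) F t \<partial>M) = 0"
proof -
  define c where "c = (\<lambda>\<omega>. if okk (\<lambda>s. G s \<omega>) F t then - (\<eta> / Gh (\<lambda>s. G s \<omega>) t) else 0)"
  define D where "D = (\<lambda>\<omega>. Dl (\<lambda>s. G s \<omega>) t)"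
  have HF: "Hm (Fl t) G t" by (rule Hm_Fl)
  note [measurable] = meas_Dl[OF HF] meas_Gh[OF HF] meas_okk[OF HF]
  have DF[measurable]: "D \<in> borel_measurable (Fl t)" unfolding D_def by measurable
  have cF[measurable]: "c \<in> borel_measurable (Fl t)" unfolding c_def by measurable
  note hF[measurable] = hm
  have sub: "subalgebra M (Fl t)" by (rule Fl_sub)
  have [measurable]: "D \<in> borel_measurable M" "c \<in> borel_measurable M" "h \<in> borel_measurable M"
    using measurable_from_subalg[OF sub DF] measurable_from_subalg[OF sub cF] measurable_from_subalg[OF sub hm] by auto
  have GM[measurable]: "G t \<in> borel_measurable M" by (rule G_meas)
  have cb: "\<bar>c \<omega>\<bar> \<le> \<eta> / \<gamma>" for \<omega>
    unfolding c_def using Gh_ge[of "\<lambda>s. G s \<omega>" t] Gh_pos[of "\<lambda>s. G s \<omega>" t] eta gamma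
    by (auto simp: frac_le)
  have Db: "\<bar>D \<omega> \<bullet> b\<bar> \<le> Bn" if "b \<in> Basis" for \<omega> b
    using Basis_le_norm[OF that, of "D \<omega>"] Dl_bd[OF t] unfolding D_def by (meson order_trans)
  define fb where "fb = (\<lambda>b \<omega>. h \<omega> * c \<omega> * (D \<omega> \<bullet> b))"
  have fbF[measurable]: "fb b \<in> borel_measurable (Fl t)" for b unfolding fb_def by measurable
  have fbM[measurable]: "fb b \<in> borel_measurable M" for b unfolding fb_def by measurable
  have Bh0: "AE \<omega> in M. 0 \<le> Bh" using hb by eventually_elim (rule order_trans[OF abs_ge_zero])
  have fbb: "AE \<omega> in M. \<bar>fb b \<omega>\<bar> \<le> Bh * (\<eta> / \<gamma>) * Bn" if b: "b \<in> Basis" for b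
    using hb
  proof eventually_elim
    case (elim \<omega>)
    have "\<bar>fb b \<omega>\<bar> = \<bar>h \<omega>\<bar> * \<bar>c \<omega>\<bar> * \<bar>D \<omega> \<bullet> b\<bar>" unfolding fb_def by (simp add: abs_mult)
    also have "\<dots> \<le> Bh * (\<eta> / \<gamma>) * Bn"
    proof -
      have "0 \<le> Bh" using elim abs_ge_zero[of "h \<omega>"] by linarith
      then show ?thesis using elim cb[of \<omega>] Db[OF b, of \<omega>] eta gamma by (intro mult_mono) auto
    qed
    finally show ?case .
  qed
  have intG: "integrable M (\<lambda>\<omega>. fb b \<omega> * (G t \<omega> \<bullet> b))" if b: "b \<in> Basis" for b
  proof (rule intgr)
    show "(\<lambda>\<omega>. fb b \<omega> * (G t \<omega> \<bullet> b)) \<in> borel_measurable M" by measurable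
    show "AE \<omega> in M. \<bar>fb b \<omega> * (G t \<omega> \<bullet> b)\<bar> \<le> Bh * (\<eta> / \<gamma>) * Bn * BG"
      using fbb[OF b] G_bd[OF t]
    proof eventually_elim
      case (elim \<omega>)
      have g: "\<bar>G t \<omega> \<bullet> b\<bar> \<le> BG" using Basis_le_norm[OF b, of "G t \<omega>"] elim by linarith
      have "0 \<le> Bh * (\<eta> / \<gamma>) * Bn" using elim(1) abs_ge_zero[of "fb b \<omega>"] by linarith
      then have "\<bar>fb b \<omega>\<bar> * \<bar>G t \<omega> \<bullet> b\<bar> \<le> (Bh * (\<eta> / \<gamma>) * Bn) * BG"
        using elim(1) g by (intro mult_mono) auto
      then show ?case by (simp add: abs_mult)
    qed
  qed
  have intD: "integrable M (\<lambda>\<omega>. fb b \<omega> * (D \<omega> \<bullet> b))" if b: "b \<in> Basis" for b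
  proof (rule intgr)
    show "(\<lambda>\<omega>. fb b \<omega> * (D \<omega> \<bullet> b)) \<in> borel_measurable M" by measurable
    show "AE \<omega> in M. \<bar>fb b \<omega> * (D \<omega> \<bullet> b)\<bar> \<le> Bh * (\<eta> / \<gamma>) * Bn * Bn"
      using fbb[OF b]
    proof eventually_elim
      case (elim \<omega>)
      have "0 \<le> Bh * (\<eta> / \<gamma>) * Bn" using elim(1) abs_ge_zero[of "fb b \<omega>"] by linarith
      then have "\<bar>fb b \<omega>\<bar> * \<bar>D \<omega> \<bullet> b\<bar> \<le> (Bh * (\<eta> / \<gamma>) * Bn) * Bn"
        using elim(1) Db[OF b, of \<omega>] by (intro mult_mono) auto
      then show ?case by (simp add: abs_mult)
    qed
  qed
  have eqb: "(\<integral>\<omega>. fb b \<omega> * (G t \<omega> \<bullet> b) \<partial>M) = (\<integral>\<omega>. fb b \<omega> * (D \<omega> \<bullet> b) \<partial>M)" if b: "b \<in> Basis" for b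
  proof -
    have "(\<integral>\<omega>. fb b \<omega> * real_cond_exp M (Fl t) (\<lambda>\<omega>. G t \<omega> \<bullet> b) \<omega> \<partial>M) = (\<integral>\<omega>. fb b \<omega> * (G t \<omega> \<bullet> b) \<partial>M)"
      by (rule sigma_finite_subalgebra.real_cond_exp_intg(2)[OF Fl_sfs intG[OF b] fbF]) measurable
    moreover have "(\<integral>\<omega>. fb b \<omega> * real_cond_exp M (Fl t) (\<lambda>\<omega>. G t \<omega> \<bullet> b) \<omega> \<partial>M) = (\<integral>\<omega>. fb b \<omega> * (D \<omega> \<bullet> b) \<partial>M)"
    proof (rule integral_cong_AE)
      show "(\<lambda>\<omega>. fb b \<omega> * real_cond_exp M (Fl t) (\<lambda>\<omega>. G t \<omega> \<bullet> b) \<omega>) \<in> borel_measurable M"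
        by measurable
      show "(\<lambda>\<omega>. fb b \<omega> * (D \<omega> \<bullet> b)) \<in> borel_measurable M" by measurable
      show "AE \<omega> in M. fb b \<omega> * real_cond_exp M (Fl t) (\<lambda>\<omega>. G t \<omega> \<bullet> b) \<omega> = fb b \<omega> * (D \<omega> \<bullet> b)"
        using unbiased'[OF t b] unfolding D_def by eventually_elim simp
    qed
    ultimately show ?thesis by simp
  qed
  have pw: "h \<omega> * Zt (\<lambda>s. G s \<omega>) F t = (\<Sum>b\<in>Basis. fb b \<omega> * (G t \<omega> \<bullet> b) - fb b \<omega> * (D \<omega> \<bullet> b))" for \<omega>
  proof -
    have z: "Zt (\<lambda>s. G s \<omega>) F t = c \<omega> * (D \<omega> \<bullet> (G t \<omega> - D \<omega>))"
      unfolding Zt_def c_def D_def by simp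
    have e: "D \<omega> \<bullet> (G t \<omega> - D \<omega>) = (\<Sum>b\<in>Basis. (D \<omega> \<bullet> b) * (G t \<omega> \<bullet> b - D \<omega> \<bullet> b))"
      using euclidean_inner[of "D \<omega>" "G t \<omega> - D \<omega>"] by (simp add: inner_diff_left)
    have "h \<omega> * Zt (\<lambda>s. G s \<omega>) F t = (\<Sum>b\<in>Basis. h \<omega> * c \<omega> * ((D \<omega> \<bullet> b) * (G t \<omega> \<bullet> b - D \<omega> \<bullet> b)))"
      unfolding z e by (simp add: sum_distrib_left mult.assoc)
    also have "\<dots> = (\<Sum>b\<in>Basis. fb b \<omega> * (G t \<omega> \<bullet> b) - fb b \<omega> * (D \<omega> \<bullet> b))"
      unfolding fb_def by (rule sum.cong) (simp_all add: algebra_simps)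
    finally show ?thesis .
  qed
  have "(\<integral>\<omega>. h \<omega> * Zt (\<lambda>s. G s \<omega>) F t \<partial>M) = (\<integral>\<omega>. (\<Sum>b\<in>Basis. fb b \<omega> * (G t \<omega> \<bullet> b) - fb b \<omega> * (D \<omega> \<bullet> b)) \<partial>M)"
    unfolding pw ..
  also have "\<dots> = (\<Sum>b\<in>Basis. (\<integral>\<omega>. fb b \<omega> * (G t \<omega> \<bullet> b) - fb b \<omega> * (D \<omega> \<bullet> b) \<partial>M))"
    by (rule Bochner_Integration.integral_sum) (use intG intD in auto)
  also have "\<dots> = 0"
  proof (intro sum.neutral ballI)
    fix b :: 'd assume b: "b \<in> Basis"
    show "(\<integral>\<omega>. fb b \<omega> * (G t \<omega> \<bullet> b) - fb b \<omega> * (D \<omega> \<bullet> b) \<partial>M) = 0"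
      using Bochner_Integration.integral_diff[OF intG[OF b] intD[OF b]] eqb[OF b] by simp
  qed
  finally show ?thesis .
qed

end

context ada_prob
begin

interpretation P: prob_space M by (rule M)

definition Phi where
  "Phi F lam k \<omega> = exp (lam * (\<Sum>s=1..k. Zt (\<lambda>s. G s \<omega>) F s) - lam\<^sup>2 * (\<Sum>s=1..k. (Yt (\<lambda>s. G s \<omega>) F s)\<^sup>2))"

lemma Phi_meas: "Hm N G (Suc k) \<Longrightarrow> (\<lambda>\<omega>. Phi F lam k \<omega>) \<in> borel_measurable N"
proof -
  assume H: "Hm N G (Suc k)"
  have [measurable]: "(\<lambda>\<omega>. Zt (\<lambda>s. G s \<omega>) F s) \<in> borel_measurable N" if "s \<in> {1..k}" for s
    using meas_Zt[of N G s F] Hm_mono[OF H, of "Suc s"] that by auto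
  have [measurable]: "(\<lambda>\<omega>. Yt (\<lambda>s. G s \<omega>) F s) \<in> borel_measurable N" if "s \<in> {1..k}" for s
    using meas_Yt[of N G s F] Hm_mono[OF H, of s] that by auto
  show ?thesis unfolding Phi_def by measurable
qed

lemma Phi_M[measurable]: "(\<lambda>\<omega>. Phi F lam k \<omega>) \<in> borel_measurable M"
  by (rule Phi_meas) (rule Hm_M)

lemma Phi_pos: "Phi F lam k \<omega> > 0" unfolding Phi_def by simp

lemma Phi_bd:
  assumes k: "k \<le> T" and lam: "lam > 0"
  shows "AE \<omega> in M. Phi F lam k \<omega> \<le> exp (lam * (real k * BY))"
  using noise_all
proof eventually_elim
  case (elim \<omega>)
  have "(\<Sum>s=1..k. Zt (\<lambda>s. G s \<omega>) F s) \<le> (\<Sum>s=1..k. BY)"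
  proof (rule sum_mono)
    fix s assume s: "s \<in> {1..k}"
    then have sT: "s \<in> {1..T}" using k by auto
    have "Zt (\<lambda>s. G s \<omega>) F s \<le> \<bar>Zt (\<lambda>s. G s \<omega>) F s\<bar>" by simp
    also have "\<dots> \<le> Yt (\<lambda>s. G s \<omega>) F s" using Zt_abs[of "\<lambda>s. G s \<omega>" s F] elim sT by blast
    also have "\<dots> \<le> BY" unfolding BY_def Bn_def using Yt_bd sT by auto
    finally show "Zt (\<lambda>s. G s \<omega>) F s \<le> BY" .
  qed
  then have "lam * (\<Sum>s=1..k. Zt (\<lambda>s. G s \<omega>) F s) \<le> lam * (real k * BY)" using lam by (simp add: mult_left_mono)
  moreover have "0 \<le> lam\<^sup>2 * (\<Sum>s=1..k. (Yt (\<lambda>s. G s \<omega>) F s)\<^sup>2)" by (simp add: sum_nonneg)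
  ultimately show ?case unfolding Phi_def by simp
qed

lemma Phi_int: "k \<le> T \<Longrightarrow> lam > 0 \<Longrightarrow> integrable M (Phi F lam k)"
proof -
  assume k: "k \<le> T" and lam: "lam > 0"
  show ?thesis
  proof (rule intgr)
    show "Phi F lam k \<in> borel_measurable M" using Phi_M by simp
    show "AE \<omega> in M. \<bar>Phi F lam k \<omega>\<bar> \<le> exp (lam * (real k * BY))"
      using Phi_bd[OF k lam] by eventually_elim (simp add: Phi_pos less_imp_le)
  qed
qed

lemma Phi_le1: "k \<le> T \<Longrightarrow> lam > 0 \<Longrightarrow> (\<integral>\<omega>. Phi F lam k \<omega> \<partial>M) \<le> 1"
proof (induction k)
  case 0
  then show ?case by (simp add: Phi_def P.prob_space)
next
  case (Suc k)
  have k: "k \<le> T" and lam: "lam > 0" and t: "Suc k \<in> {1..T}" using Suc.prems by auto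
  define Z where "Z = (\<lambda>\<omega>. Zt (\<lambda>s. G s \<omega>) F (Suc k))"
  define Y where "Y = (\<lambda>\<omega>. Yt (\<lambda>s. G s \<omega>) F (Suc k))"
  define h where "h = (\<lambda>\<omega>. Phi F lam k \<omega> * exp (- (lam\<^sup>2 * (Y \<omega>)\<^sup>2)))"
  have HF: "Hm (Fl (Suc k)) G (Suc k)" by (rule Hm_Fl)
  have [measurable]: "(\<lambda>\<omega>. Phi F lam k \<omega>) \<in> borel_measurable (Fl (Suc k))" by (rule Phi_meas[OF HF])
  have [measurable]: "Y \<in> borel_measurable (Fl (Suc k))" unfolding Y_def by (rule meas_Yt[OF HF])
  have hF: "h \<in> borel_measurable (Fl (Suc k))" unfolding h_def by measurable
  have [measurable]: "Y \<in> borel_measurable M" unfolding Y_def by (rule meas_Yt[OF Hm_M])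
  have [measurable]: "Z \<in> borel_measurable M" unfolding Z_def by (rule meas_Zt[OF Hm_M]) simp
  have hM[measurable]: "h \<in> borel_measurable M" unfolding h_def by measurable
  have hpos: "0 \<le> h \<omega>" for \<omega> unfolding h_def using Phi_pos[of F lam k \<omega>] by simp
  have hle: "h \<omega> \<le> Phi F lam k \<omega>" for \<omega> unfolding h_def using Phi_pos[of F lam k \<omega>]
    by (simp add: mult_le_cancel_left1)
  define B where "B = exp (lam * (real k * BY))"
  have hb: "AE \<omega> in M. \<bar>h \<omega>\<bar> \<le> B"
    using Phi_bd[OF k lam, of F] unfolding B_def
  proof eventually_elim
    case (elim \<omega>)
    show ?case using elim hle[of \<omega>] abs_of_nonneg[OF hpos[of \<omega>]] by linarith
  qed
  have ZY: "AE \<omega> in M. \<bar>Z \<omega>\<bar> \<le> Y \<omega>"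
    using noise_all unfolding Z_def Y_def
  proof eventually_elim
    case (elim \<omega>)
    show ?case using Zt_abs[of "\<lambda>s. G s \<omega>" "Suc k" F] elim t by blast
  qed
  have Ybd: "Y \<omega> \<le> BY" for \<omega> unfolding Y_def BY_def Bn_def using Yt_bd t by auto
  have Phi_split: "Phi F lam (Suc k) \<omega> = h \<omega> * exp (lam * Z \<omega>)" for \<omega>
  proof -
    define S where "S = (\<Sum>s=1..k. Zt (\<lambda>s. G s \<omega>) F s)"
    define Q where "Q = (\<Sum>s=1..k. (Yt (\<lambda>s. G s \<omega>) F s)\<^sup>2)"
    have "Phi F lam (Suc k) \<omega> = exp (lam * (S + Z \<omega>) - lam\<^sup>2 * (Q + (Y \<omega>)\<^sup>2))"
      unfolding Phi_def S_def Q_def Z_def Y_def by (simp add: sum.cl_ivl_Suc)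
    also have "lam * (S + Z \<omega>) - lam\<^sup>2 * (Q + (Y \<omega>)\<^sup>2) = (lam * S - lam\<^sup>2 * Q + - (lam\<^sup>2 * (Y \<omega>)\<^sup>2)) + lam * Z \<omega>"
      by (simp add: algebra_simps)
    also have "exp \<dots> = Phi F lam k \<omega> * exp (- (lam\<^sup>2 * (Y \<omega>)\<^sup>2)) * exp (lam * Z \<omega>)"
      unfolding Phi_def S_def Q_def by (simp only: exp_add)
    finally show ?thesis unfolding h_def .
  qed
  have zm: "(\<integral>\<omega>. h \<omega> * Z \<omega> \<partial>M) = 0" unfolding Z_def by (rule zero_mean[OF t hF hb])
  have int_hZ: "integrable M (\<lambda>\<omega>. h \<omega> * Z \<omega>)"
  proof (rule intgr)
    show "(\<lambda>\<omega>. h \<omega> * Z \<omega>) \<in> borel_measurable M" by measurable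
    show "AE \<omega> in M. \<bar>h \<omega> * Z \<omega>\<bar> \<le> B * BY"
      using hb ZY
    proof eventually_elim
      case (elim \<omega>)
      have "\<bar>Z \<omega>\<bar> \<le> BY" using elim(2) Ybd[of \<omega>] by linarith
      moreover have "0 \<le> B" unfolding B_def by simp
      ultimately show ?case using elim(1) by (simp add: abs_mult mult_mono)
    qed
  qed
  have int_k: "integrable M (Phi F lam k)" by (rule Phi_int[OF k lam])
  have int_t: "integrable M (Phi F lam (Suc k))" by (rule Phi_int) (use Suc.prems in auto)
  have "(\<integral>\<omega>. Phi F lam (Suc k) \<omega> \<partial>M) \<le> (\<integral>\<omega>. lam * (h \<omega> * Z \<omega>) + Phi F lam k \<omega> \<partial>M)"
  proof (rule integral_mono_AE)
    show "integrable M (Phi F lam (Suc k))" by (rule int_t)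
    show "integrable M (\<lambda>\<omega>. lam * (h \<omega> * Z \<omega>) + Phi F lam k \<omega>)" using int_hZ int_k by auto
    show "AE \<omega> in M. Phi F lam (Suc k) \<omega> \<le> lam * (h \<omega> * Z \<omega>) + Phi F lam k \<omega>"
      using ZY
    proof eventually_elim
      case (elim \<omega>)
      have "(lam * Z \<omega>)\<^sup>2 \<le> lam\<^sup>2 * (Y \<omega>)\<^sup>2"
      proof -
        have "(Z \<omega>)\<^sup>2 \<le> (Y \<omega>)\<^sup>2" using elim by (metis abs_ge_zero abs_le_square_iff order_trans abs_of_nonneg power2_abs)
        then show ?thesis using lam by (simp add: power_mult_distrib mult_left_mono)
      qed
      then have "exp ((lam * Z \<omega>)\<^sup>2) \<le> exp (lam\<^sup>2 * (Y \<omega>)\<^sup>2)" by simp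
      then have "exp (lam * Z \<omega>) \<le> lam * Z \<omega> + exp (lam\<^sup>2 * (Y \<omega>)\<^sup>2)"
        using exp_ineq[of "lam * Z \<omega>"] by linarith
      then have "h \<omega> * exp (lam * Z \<omega>) \<le> h \<omega> * (lam * Z \<omega> + exp (lam\<^sup>2 * (Y \<omega>)\<^sup>2))"
        using hpos by (intro mult_left_mono) auto
      also have "\<dots> = lam * (h \<omega> * Z \<omega>) + Phi F lam k \<omega>"
      proof -
        have e1: "exp (- (lam\<^sup>2 * (Y \<omega>)\<^sup>2)) * exp (lam\<^sup>2 * (Y \<omega>)\<^sup>2) = 1"
          by (simp add: exp_minus_inverse mult.commute)
        have "h \<omega> * (lam * Z \<omega> + exp (lam\<^sup>2 * (Y \<omega>)\<^sup>2)) = lam * (h \<omega> * Z \<omega>) + Phi F lam k \<omega> * (exp (- (lam\<^sup>2 * (Y \<omega>)\<^sup>2)) * exp (lam\<^sup>2 * (Y \<omega>)\<^sup>2))"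
          unfolding h_def by (simp add: algebra_simps)
        then show ?thesis unfolding e1 by simp
      qed
      finally show ?case using Phi_split by simp
    qed
  qed
  also have "\<dots> = lam * (\<integral>\<omega>. h \<omega> * Z \<omega> \<partial>M) + (\<integral>\<omega>. Phi F lam k \<omega> \<partial>M)"
    using int_hZ int_k by simp
  also have "\<dots> \<le> 1" using zm Suc.IH k lam by simp
  finally show ?case .
qed

lemma Phi_markov:
  assumes k: "k \<le> T" and lam: "lam > 0" and c: "c > 0"
  shows "measure M {\<omega>\<in>space M. Phi F lam k \<omega> \<ge> c} \<le> 1 / c"
proof -
  have "measure M {\<omega>\<in>space M. Phi F lam k \<omega> \<ge> c} \<le> (\<integral>\<omega>. Phi F lam k \<omega> \<partial>M) / c"
    by (rule integral_Markov_inequality_measure[OF Phi_int[OF k lam] sets.top])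
      (use c Phi_pos in \<open>auto intro!: AE_I2 less_imp_le\<close>)
  also have "\<dots> \<le> 1 / c" using Phi_le1[OF k lam] c by (simp add: divide_right_mono)
  finally show ?thesis .
qed

end

context ada_prob
begin

interpretation P: prob_space M by (rule M)

definition Bad where
  "Bad F Lln R t = {\<omega>\<in>space M. (\<Sum>s=1..t. Vt (\<lambda>s. G s \<omega>) F s) / 2 + 2 * Lln * \<eta> * R < (\<Sum>s=1..t. Zt (\<lambda>s. G s \<omega>) F s)}"

definition Nz where
  "Nz = {\<omega>\<in>space M. \<not> (\<forall>t\<in>{1..T}. norm (G t \<omega> - Dl (\<lambda>s. G s \<omega>) t) \<le> rr (\<lambda>s. G s \<omega>) t)}"

lemma Nz_sets: "Nz \<in> sets M"
proof -
  have [measurable]: "(\<lambda>\<omega>. Dl (\<lambda>s. G s \<omega>) t) \<in> borel_measurable M" for t by (rule meas_Dl[OF Hm_M])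
  have [measurable]: "(\<lambda>\<omega>. rr (\<lambda>s. G s \<omega>) t) \<in> borel_measurable M" for t by (rule meas_rr[OF Hm_M])
  note [measurable] = G_meas
  show ?thesis unfolding Nz_def by measurable
qed

lemma Nz_null: "measure M Nz = 0"
proof -
  have "emeasure M Nz = 0"
    using AE_iff_measurable[OF Nz_sets, of "\<lambda>\<omega>. \<forall>t\<in>{1..T}. norm (G t \<omega> - Dl (\<lambda>s. G s \<omega>) t) \<le> rr (\<lambda>s. G s \<omega>) t"]
      noise_all unfolding Nz_def by simp
  then show ?thesis by (simp add: P.emeasure_eq_measure)
qed

lemma Bad_sets: "Bad F Lln R t \<in> sets M"
proof -
  have [measurable]: "(\<lambda>\<omega>. Zt (\<lambda>s. G s \<omega>) F s) \<in> borel_measurable M" if "s \<in> {1..t}" for s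
    using meas_Zt[OF Hm_M, of s F] that by auto
  have [measurable]: "(\<lambda>\<omega>. Vt (\<lambda>s. G s \<omega>) F s) \<in> borel_measurable M" for s by (rule meas_Vt[OF Hm_M])
  show ?thesis unfolding Bad_def by measurable
qed

lemma Bad_prob:
  assumes t: "t \<in> {1..T}" and R: "R = \<sigma>0 + \<sigma>1 * sqrt (2 * \<beta> * F)" and F0: "F \<ge> 0"
    and d: "0 < \<delta>" and Lln: "Lln = ln (real T / \<delta>)"
  shows "measure M (Bad F Lln R t) \<le> \<delta> / real T"
proof (cases "R > 0")
  case True
  define lam where "lam = 1 / (2 * \<eta> * R)"
  have lam: "lam > 0" unfolding lam_def using True eta by simp
  have tT: "t \<le> T" using t by simp
  have T0: "real T > 0" using t by simp
  have sub: "Bad F Lln R t \<subseteq> {\<omega>\<in>space M. Phi F lam t \<omega> \<ge> real T / \<delta>}"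
  proof
    fix \<omega> assume w: "\<omega> \<in> Bad F Lln R t"
    define Sz where "Sz = (\<Sum>s=1..t. Zt (\<lambda>s. G s \<omega>) F s)"
    define Sv where "Sv = (\<Sum>s=1..t. Vt (\<lambda>s. G s \<omega>) F s)"
    define Sy where "Sy = (\<Sum>s=1..t. (Yt (\<lambda>s. G s \<omega>) F s)\<^sup>2)"
    have b: "Sv / 2 + 2 * Lln * \<eta> * R < Sz" using w unfolding Bad_def Sz_def Sv_def by auto
    have "lam * Sy = (\<Sum>s=1..t. lam * (Yt (\<lambda>s. G s \<omega>) F s)\<^sup>2)" unfolding Sy_def by (simp add: sum_distrib_left)
    also have "\<dots> \<le> (\<Sum>s=1..t. Vt (\<lambda>s. G s \<omega>) F s / 2)"
      using lamY[OF True R] unfolding lam_def by (intro sum_mono) auto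
    also have "\<dots> = Sv / 2" unfolding Sv_def by (simp add: sum_divide_distrib)
    finally have y: "lam * Sy \<le> Sv / 2" .
    have "lam * (2 * Lln * \<eta> * R) = Lln" unfolding lam_def using True eta by simp
    then have "lam * (Sv / 2) + Lln < lam * Sz" using b lam by (metis distrib_left mult_strict_left_mono)
    moreover have "lam\<^sup>2 * Sy \<le> lam * (Sv / 2)" using y lam by (simp add: power2_eq_square mult_left_mono mult.assoc)
    ultimately have "Lln < lam * Sz - lam\<^sup>2 * Sy" by linarith
    then have "exp Lln < Phi F lam t \<omega>" unfolding Phi_def Sz_def Sy_def by simp
    moreover have "exp Lln = real T / \<delta>" unfolding Lln using T0 d by simp
    ultimately show "\<omega> \<in> {\<omega>\<in>space M. Phi F lam t \<omega> \<ge> real T / \<delta>}" using w unfolding Bad_def by auto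
  qed
  have "measure M (Bad F Lln R t) \<le> measure M {\<omega>\<in>space M. Phi F lam t \<omega> \<ge> real T / \<delta>}"
    by (rule P.finite_measure_mono[OF sub]) measurable
  also have "\<dots> \<le> 1 / (real T / \<delta>)" by (rule Phi_markov[OF tT lam]) (use T0 d in simp)
  finally show ?thesis by simp
next
  case False
  have R0: "R = 0" using False R sig0 sig1 F0 beta0 by (smt (verit) mult_nonneg_nonneg real_sqrt_ge_zero zero_le_mult_iff)
  have sub: "Bad F Lln R t \<subseteq> Nz"
  proof
    fix \<omega> assume w: "\<omega> \<in> Bad F Lln R t"
    show "\<omega> \<in> Nz"
    proof (rule ccontr)
      assume "\<omega> \<notin> Nz"
      then have nz: "\<forall>s\<in>{1..T}. norm (G s \<omega> - Dl (\<lambda>s. G s \<omega>) s) \<le> rr (\<lambda>s. G s \<omega>) s"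
        using w unfolding Nz_def Bad_def by auto
      have "Zt (\<lambda>s. G s \<omega>) F s = 0" if s: "s \<in> {1..t}" for s
      proof (cases "okk (\<lambda>s. G s \<omega>) F s")
        case True
        have "rr (\<lambda>s. G s \<omega>) s \<le> R" using rr_le[OF True] s R by simp
        moreover have "s \<in> {1..T}" using s t by auto
        then have "norm (G s \<omega> - Dl (\<lambda>s. G s \<omega>) s) \<le> rr (\<lambda>s. G s \<omega>) s" using nz by blast
        ultimately have "norm (G s \<omega> - Dl (\<lambda>s. G s \<omega>) s) \<le> 0" using R0 by linarith
        then have "G s \<omega> - Dl (\<lambda>s. G s \<omega>) s = 0" by simp
        then show ?thesis unfolding Zt_def by simp
      next
        case False then show ?thesis unfolding Zt_def by simp
      qed
      then have "(\<Sum>s=1..t. Zt (\<lambda>s. G s \<omega>) F s) = 0" by simp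
      moreover have "0 \<le> (\<Sum>s=1..t. Vt (\<lambda>s. G s \<omega>) F s)" by (simp add: sum_nonneg Vt_nn)
      ultimately show False using w R0 unfolding Bad_def by auto
    qed
  qed
  have "measure M (Bad F Lln R t) \<le> measure M Nz" by (rule P.finite_measure_mono[OF sub Nz_sets])
  also have "\<dots> = 0" by (rule Nz_null)
  moreover have "0 \<le> \<delta> / real T" using d by simp
  ultimately show ?thesis by linarith
qed

end

context ada_prob
begin

interpretation P: prob_space M by (rule M)

lemma final:
  assumes T1: "T \<ge> 1" and delta: "0 < \<delta>" "\<delta> < 1"
  shows "let \<Delta>1 = f w1 - fstar;
             C1 = log 2 (1 + (2 * \<sigma>0\<^sup>2 * real T
                    + 8 * (1 + \<sigma>1\<^sup>2) * (\<eta>\<^sup>2 * \<beta>\<^sup>2 * real T ^ 3 + \<beta> * \<Delta>1 * real T)) / \<gamma>\<^sup>2);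
             L = log 2 (real T / \<delta>);
             F = 2 * \<Delta>1 + (3 * L + 4 * C1) * \<eta> * \<sigma>0
                 + (9 * L\<^sup>2 + 16 * C1\<^sup>2) * \<eta>\<^sup>2 * \<beta> * \<sigma>1\<^sup>2 + \<eta>\<^sup>2 * \<beta> * C1
         in measure M {\<omega> \<in> space M.
               Max ((\<lambda>t. f (adasgd_w w1 \<eta> \<gamma> (\<lambda>s. G s \<omega>) t)) ` {1..T+1}) - fstar \<le> F}
            \<ge> 1 - \<delta>"
proof -
  define \<Delta>1 where "\<Delta>1 = f w1 - fstar"
  define X where "X = 2 * \<sigma>0\<^sup>2 * real T + 8 * (1 + \<sigma>1\<^sup>2) * (\<eta>\<^sup>2 * \<beta>\<^sup>2 * real T ^ 3 + \<beta> * \<Delta>1 * real T)"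
  define C1 where "C1 = log 2 (1 + X / \<gamma>\<^sup>2)"
  define L where "L = log 2 (real T / \<delta>)"
  define F where "F = 2 * \<Delta>1 + (3 * L + 4 * C1) * \<eta> * \<sigma>0 + (9 * L\<^sup>2 + 16 * C1\<^sup>2) * \<eta>\<^sup>2 * \<beta> * \<sigma>1\<^sup>2 + \<eta>\<^sup>2 * \<beta> * C1"
  define k where "k = ln (2::real)"
  have k: "0 < k" "k \<le> 3/4" unfolding k_def using ln2_le by auto
  have D0: "\<Delta>1 \<ge> 0" unfolding \<Delta>1_def using fmin[of w1] by simp
  have X0: "X \<ge> 0" unfolding X_def using D0 beta0 by simp
  have g2: "\<gamma>\<^sup>2 > 0" using gamma by simp
  have arg1: "1 + X / \<gamma>\<^sup>2 \<ge> 1" using X0 g2 by simp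
  have C0: "C1 \<ge> 0" unfolding C1_def using arg1 by simp
  have T0: "real T > 0" using T1 by simp
  have Td: "real T / \<delta> > 1" using T1 delta by (simp add: field_simps)
  have L0: "L \<ge> 0" unfolding L_def using Td by simp
  have F0: "F \<ge> 0" unfolding F_def using D0 L0 C0 eta sig0 sig1 beta0 by (simp add: add_nonneg_nonneg)
  define Lln where "Lln = k * L"
  have Lln: "Lln = ln (real T / \<delta>)" unfolding Lln_def k_def L_def log_def using Td by simp
  have Lln0: "Lln \<ge> 0" unfolding Lln_def using k L0 by simp
  define Cln where "Cln = k * C1"
  have Cln: "Cln = ln (1 + X / \<gamma>\<^sup>2)" unfolding Cln_def k_def C1_def log_def by simp
  define R where "R = \<sigma>0 + \<sigma>1 * sqrt (2 * \<beta> * F)"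
  have Fbig: "(f w1 - fstar) + (2 * Lln + 5 / 2 * Cln) * \<eta> * R + \<beta> / 2 * \<eta>\<^sup>2 * Cln \<le> F"
    using F_alg[OF k L0 C0 beta0 eta sig0 sig1 D0 F_def] unfolding Lln_def Cln_def R_def \<Delta>1_def by simp
  define A where "A = {\<omega> \<in> space M. Max ((\<lambda>t. f (adasgd_w w1 \<eta> \<gamma> (\<lambda>s. G s \<omega>) t)) ` {1..T+1}) - fstar \<le> F}"
  have A_eq: "A = {\<omega> \<in> space M. \<forall>t\<in>{1..T+1}. f (W (\<lambda>s. G s \<omega>) t) \<le> F + fstar}"
  proof -
    have "Max ((\<lambda>t. f (adasgd_w w1 \<eta> \<gamma> (\<lambda>s. G s \<omega>) t)) ` {1..T+1}) - fstar \<le> F \<longleftrightarrow>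
        (\<forall>t\<in>{1..T+1}. f (W (\<lambda>s. G s \<omega>) t) \<le> F + fstar)" for \<omega>
    proof -
      have m: "Max ((\<lambda>t. f (adasgd_w w1 \<eta> \<gamma> (\<lambda>s. G s \<omega>) t)) ` {1..T+1}) \<le> F + fstar \<longleftrightarrow>
          (\<forall>a\<in>(\<lambda>t. f (adasgd_w w1 \<eta> \<gamma> (\<lambda>s. G s \<omega>) t)) ` {1..T+1}. a \<le> F + fstar)"
        by (rule Max_le_iff) auto
      have m2: "(\<forall>a\<in>(\<lambda>t. f (adasgd_w w1 \<eta> \<gamma> (\<lambda>s. G s \<omega>) t)) ` {1..T+1}. a \<le> F + fstar) \<longleftrightarrow>
          (\<forall>t\<in>{1..T+1}. f (W (\<lambda>s. G s \<omega>) t) \<le> F + fstar)" unfolding W_def by blast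
      have m3: "Max ((\<lambda>t. f (adasgd_w w1 \<eta> \<gamma> (\<lambda>s. G s \<omega>) t)) ` {1..T+1}) - fstar \<le> F \<longleftrightarrow>
          Max ((\<lambda>t. f (adasgd_w w1 \<eta> \<gamma> (\<lambda>s. G s \<omega>) t)) ` {1..T+1}) \<le> F + fstar" by linarith
      show ?thesis using m m2 m3 by blast
    qed
    then show ?thesis unfolding A_def by auto
  qed
  have A_sets: "A \<in> sets M"
  proof -
    have [measurable]: "(\<lambda>\<omega>. W (\<lambda>s. G s \<omega>) t) \<in> borel_measurable M" for t by (rule meas_W[OF Hm_M])
    show ?thesis unfolding A_eq by measurable
  qed
  have sub: "space M - A \<subseteq> Nz \<union> (\<Union>t\<in>{1..T}. Bad F Lln R t)"
  proof
    fix \<omega> assume w: "\<omega> \<in> space M - A"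
    show "\<omega> \<in> Nz \<union> (\<Union>t\<in>{1..T}. Bad F Lln R t)"
    proof (rule ccontr)
      assume nw: "\<omega> \<notin> Nz \<union> (\<Union>t\<in>{1..T}. Bad F Lln R t)"
      define g where "g = (\<lambda>s. G s \<omega>)"
      have nz: "\<forall>s\<in>{1..T}. norm (g s - Dl g s) \<le> rr g s" using nw w unfolding Nz_def g_def by auto
      have conc: "\<forall>t\<in>{1..T}. (\<Sum>s=1..t. Zt g F s) \<le> (\<Sum>s=1..t. Vt g F s) / 2 + 2 * Lln * \<eta> * R"
        using nw w unfolding Bad_def g_def by (auto simp: not_less)
      have Cb: "ln (Sq g T / \<gamma>\<^sup>2) \<le> Cln"
      proof -
        have "Sq g T \<le> \<gamma>\<^sup>2 + X" using Sq_bound[OF nz] unfolding X_def \<Delta>1_def .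
        then have "Sq g T / \<gamma>\<^sup>2 \<le> 1 + X / \<gamma>\<^sup>2" using g2 by (simp add: field_simps)
        moreover have "Sq g T / \<gamma>\<^sup>2 > 0" using Sq_pos[of g T] g2 by simp
        ultimately show ?thesis unfolding Cln by simp
      qed
      have "\<forall>t\<in>{1..T+1}. f (W g t) - fstar \<le> F"
        by (rule det_main[OF T1 nz conc R_def F0 Lln0 Cb Fbig])
      then have "\<omega> \<in> A" unfolding A_eq g_def using w by auto
      then show False using w by simp
    qed
  qed
  have Bs: "Bad F Lln R t \<in> sets M" for t by (rule Bad_sets)
  have UB: "(\<Union>t\<in>{1..T}. Bad F Lln R t) \<in> sets M" using Bs by auto
  have m1: "measure M (space M - A) \<le> measure M (Nz \<union> (\<Union>t\<in>{1..T}. Bad F Lln R t))"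
    by (rule P.finite_measure_mono[OF sub]) (use Nz_sets UB in auto)
  have m2: "measure M (Nz \<union> (\<Union>t\<in>{1..T}. Bad F Lln R t)) \<le> measure M Nz + measure M (\<Union>t\<in>{1..T}. Bad F Lln R t)"
    by (rule measure_Un_le[OF Nz_sets UB])
  have m3: "measure M (\<Union>t\<in>{1..T}. Bad F Lln R t) \<le> (\<Sum>t\<in>{1..T}. measure M (Bad F Lln R t))"
    by (rule P.finite_measure_subadditive_finite) (use Bs in auto)
  have m4: "(\<Sum>t\<in>{1..T}. measure M (Bad F Lln R t)) \<le> (\<Sum>t\<in>{1..T}. \<delta> / real T)"
  proof (rule sum_mono)
    fix t assume t: "t \<in> {1..T}"
    show "measure M (Bad F Lln R t) \<le> \<delta> / real T" by (rule Bad_prob[OF t R_def F0 delta(1) Lln])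
  qed
  have m5: "(\<Sum>t\<in>{1..T}. \<delta> / real T) = \<delta>" using T0 by simp
  have "measure M (space M - A) \<le> \<delta>" using m1 m2 m3 m4 m5 Nz_null by linarith
  moreover have "measure M (space M - A) = 1 - measure M A" using P.prob_compl[OF A_sets] by simp
  ultimately have "measure M A \<ge> 1 - \<delta>" by simp
  then show ?thesis unfolding Let_def A_def F_def L_def C1_def X_def \<Delta>1_def .
qed

end

theorem lemma2:
  fixes f :: "'d::euclidean_space \<Rightarrow> real" and df :: "'d \<Rightarrow> 'd"
    and M :: "'m measure" and G :: "nat \<Rightarrow> 'm \<Rightarrow> 'd"
    and w1 :: 'd and \<beta> fstar \<eta> \<gamma> \<sigma>0 \<sigma>1 \<delta> :: real and T :: nat
  assumes grad: "\<And>x. GDERIV f x :> df x"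
    and smooth: "\<And>x y. norm (df x - df y) \<le> \<beta> * norm (x - y)"
    and fmin: "\<And>x. fstar \<le> f x" and fmin_att: "\<exists>x. f x = fstar"
    and eta: "\<eta> > 0" and gamma: "\<gamma> > 0"
    and sig0: "\<sigma>0 \<ge> 0" and sig1: "\<sigma>1 \<ge> 0"
    and T: "T \<ge> 1"
    and delta: "0 < \<delta>" "\<delta> < 1"
    and M: "prob_space M"
    and G_meas: "\<And>t. G t \<in> borel_measurable M"
    and unbiased: "\<And>t b. t \<in> {1..T} \<Longrightarrow> b \<in> Basis \<Longrightarrow>
        AE \<omega> in M. real_cond_exp M (adasgd_filt M G t) (\<lambda>\<omega>. G t \<omega> \<bullet> b) \<omega>
                    = df (adasgd_w w1 \<eta> \<gamma> (\<lambda>s. G s \<omega>) t) \<bullet> b"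
    and noise: "\<And>t. t \<in> {1..T} \<Longrightarrow>
        AE \<omega> in M. (norm (G t \<omega> - df (adasgd_w w1 \<eta> \<gamma> (\<lambda>s. G s \<omega>) t)))\<^sup>2
                    \<le> \<sigma>0\<^sup>2 + \<sigma>1\<^sup>2 * (norm (df (adasgd_w w1 \<eta> \<gamma> (\<lambda>s. G s \<omega>) t)))\<^sup>2"
  shows "let \<Delta>1 = f w1 - fstar;
             C1 = log 2 (1 + (2 * \<sigma>0\<^sup>2 * real T
                    + 8 * (1 + \<sigma>1\<^sup>2) * (\<eta>\<^sup>2 * \<beta>\<^sup>2 * real T ^ 3 + \<beta> * \<Delta>1 * real T)) / \<gamma>\<^sup>2);
             L = log 2 (real T / \<delta>);
             F = 2 * \<Delta>1 + (3 * L + 4 * C1) * \<eta> * \<sigma>0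
                 + (9 * L\<^sup>2 + 16 * C1\<^sup>2) * \<eta>\<^sup>2 * \<beta> * \<sigma>1\<^sup>2 + \<eta>\<^sup>2 * \<beta> * C1
         in measure M {\<omega> \<in> space M.
               Max ((\<lambda>t. f (adasgd_w w1 \<eta> \<gamma> (\<lambda>s. G s \<omega>) t)) ` {1..T+1}) - fstar \<le> F}
            \<ge> 1 - \<delta>"
proof -
  have ada: "ada f df \<beta> fstar \<eta> \<gamma> \<sigma>0 \<sigma>1" by (rule ada.intro[OF grad smooth fmin eta gamma sig0 sig1])
  interpret ada_prob f df \<beta> fstar \<eta> \<gamma> \<sigma>0 \<sigma>1 w1 M G T
    by (rule ada_prob.intro[OF ada ada_prob_axioms.intro[OF M G_meas unbiased noise]])
  show ?thesis by (rule final[OF T delta])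
qed

end
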